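(* Consider any fixed training set $S_{\mathrm{e2e}}=\{(x^{(i)},y^{(i)}):i\in[m]\}$ with $y^{(i)}=h_*(x^{(i)})$ for some $h_*\in\mathrm{e2e}^T(\mathcal F)$. There is a universal constant $c>0$ such that for any $\delta\in(0,1)$, the Boosting Algorithm invoked with per-thinker budget $\mathsf M_\star=c\,\mathrm{VCdim}(\mathrm{e2e}^T(\mathcal F))$, with the thinkers $f_{k,\ell}$ chosen adversarially (each $f_{k,\ell}\in\mathcal F$ with $\mathrm{e2e}^T_{f_{k,\ell}}\equiv h_*$, possibly depending on the whole history and on the current sampled index set $\mathcal S_{k,\ell}$), satisfies, with probability at least $1-\delta/2$ over its internal randomness of subsampling, simultaneously for all $k\in[K]$: $$\epsilon_k:=\Pr_{i\sim D^{(k)}}\big[\mathrm{e2e}^T_{\hat f_k}(x^{(i)})\ne h_*(x^{(i)})\big]\le0.25.$$ Moreover, in the relaxed protocol where each $f_{k,\ell}$ is fixed by the adversary before observing $\mathcal S_{k,\ell}$, the same guarantee holds with $\mathsf M_\star=c\,\mathrm{VCdim}(\mathcal L^T_{\mathrm{CoT}}(\mathcal F))=O(\mathrm{VCdim}(\mathcal F)\log T)$.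
   Context: Autoregressive generation: for $f:\{0,1\}^*\to\{0,1\}$, $\bar f(x)=(x,f(x))$; $\mathrm{e2e}^T_f(x)$ is the last bit of $\bar f^{\circ T}(x)$ and $\mathrm{CoT}^T_f(x)=(\mathrm{e2e}^1_f(x),\dots,\mathrm{e2e}^T_f(x))$; $\mathrm{e2e}^T(\mathcal F)=\{\mathrm{e2e}^T_f:f\in\mathcal F\}$. $\mathcal L^T_{\mathrm{CoT}}(\mathcal F)=\{(x,z)\mapsto\mathbb 1\{z\ne\mathrm{CoT}^T_f(x)\}:f\in\mathcal F\}$; $\mathrm{VCdim}(\mathcal F)$ is on $\mathcal X\times\{0,1\}^T$. Boosting Algorithm (input $S_{\mathrm{e2e}}$, $K$, $\mathsf M_\star$, $\delta$): $D^{(1)}$ uniform on $[m]$. For $k=1,\dots,K$: for $\ell=1,\dots,\log(2K/\delta)$: draw $\mathcal S_{k,\ell}$ consisting of $\mathsf M_\star$ indices i.i.d. from $D^{(k)}$; obtain $\mathrm{CoT}^T_{f_{k,\ell}}(x^{(i)})$ for $i\in\mathcal S_{k,\ell}$ from an adversarially chosen thinker $f_{k,\ell}$; find $\hat f_{k,\ell}\in\mathcal F$ whose CoTs agree with all observed CoTs; let $\epsilon_{k,\ell}=\sum_iD^{(k)}_i\mathbb 1[\mathrm{e2e}^T_{\hat f_{k,\ell}}(x^{(i)})\ne y^{(i)}]$ and stop the inner loop if $\epsilon_{k,\ell}\le0.25$. $\hat f_k$ is the last $\hat f_{k,\ell}$. If its error $\epsilon_k=0$ the algorithm stops; otherwise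 $\alpha_k=\frac12\log\frac{1-\epsilon_k}{\epsilon_k}$ and $D^{(k+1)}_i\propto D^{(k)}_ie^{\pm\alpha_k}$ ($+$ if $\hat f_k$ errs end-to-end on $i$, $-$ otherwise), normalized. *)

theory Defs
  imports "HOL-Probability.Probability"
begin

type_synonym thinker = "bool list \<Rightarrow> bool"
(* history of all previous inner iterations: (sampled index list S_{k,l}, thinker f_{k,l}, learned f^_{k,l}) *)
type_synonym history = "(nat list \<times> thinker \<times> thinker) list"

definition fbar :: "thinker \<Rightarrow> bool list \<Rightarrow> bool list" where
  "fbar f x = x @ [f x]"

definition e2e :: "nat \<Rightarrow> thinker \<Rightarrow> bool list \<Rightarrow> bool" where
  "e2e T f x = last ((fbar f ^^ T) x)"

definition CoT :: "nat \<Rightarrow> thinker \<Rightarrow> bool list \<Rightarrow> bool list" where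
  "CoT T f x = map (\<lambda>t. e2e t f x) [1..<Suc T]"

definition CoT_loss_class :: "nat \<Rightarrow> thinker set \<Rightarrow> (bool list \<times> bool list \<Rightarrow> bool) set" where
  "CoT_loss_class T F = {(\<lambda>(x, z). z \<noteq> CoT T f x) | f. f \<in> F}"

definition shatters :: "('a \<Rightarrow> bool) set \<Rightarrow> 'a set \<Rightarrow> bool" where
  "shatters H C \<longleftrightarrow> (\<forall>B\<subseteq>C. \<exists>h\<in>H. \<forall>x\<in>C. h x \<longleftrightarrow> x \<in> B)"

definition VCdim :: "'a set \<Rightarrow> ('a \<Rightarrow> bool) set \<Rightarrow> enat" where
  "VCdim A H = (SUP C \<in> {C. finite C \<and> C \<subseteq> A \<and> shatters H C}. enat (card C))"

fun iid_pmf :: "nat \<Rightarrow> 'a pmf \<Rightarrow> 'a list pmf" where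
  "iid_pmf 0 D = return_pmf []"
| "iid_pmf (Suc n) D = bind_pmf D (\<lambda>i. map_pmf (Cons i) (iid_pmf n D))"

definition consistent :: "nat \<Rightarrow> thinker \<Rightarrow> (bool list \<times> bool list) list \<Rightarrow> bool" where
  "consistent T g obs \<longleftrightarrow> (\<forall>(x, z)\<in>set obs. CoT T g x = z)"

definition e2e_err :: "nat \<Rightarrow> (nat \<Rightarrow> bool list) \<Rightarrow> (nat \<Rightarrow> bool) \<Rightarrow> nat pmf \<Rightarrow> thinker \<Rightarrow> real" where
  "e2e_err T xs ys D g = measure_pmf.prob D {i. e2e T g (xs i) \<noteq> ys i}"

(* one inner iteration: draw S ~ D^M, adversary picks thinker, learner picks a consistent hypothesis *)
definition boost_try ::
  "nat \<Rightarrow> nat \<Rightarrow> (nat \<Rightarrow> bool list) \<Rightarrow> (nat \<Rightarrow> bool) \<Rightarrow> (history \<Rightarrow> nat list \<Rightarrow> thinker)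
   \<Rightarrow> (history \<Rightarrow> (bool list \<times> bool list) list \<Rightarrow> thinker) \<Rightarrow> nat pmf \<Rightarrow> history
   \<Rightarrow> (history \<times> thinker \<times> real) pmf" where
  "boost_try T M xs ys adv sel D hist =
     map_pmf (\<lambda>S. let f = adv hist S;
                      obs = map (\<lambda>i. (xs i, CoT T f (xs i))) S;
                      g = sel hist obs
                  in (hist @ [(S, f, g)], g, e2e_err T xs ys D g))
       (iid_pmf M D)"

(* inner loop with at most n tries; stops as soon as the error is <= 1/4;
   returns the last learned hypothesis and its error (case n = 0 is never invoked) *)
fun boost_inner ::
  "nat \<Rightarrow> nat \<Rightarrow> (nat \<Rightarrow> bool list) \<Rightarrow> (nat \<Rightarrow> bool) \<Rightarrow> (history \<Rightarrow> nat list \<Rightarrow> thinker)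
   \<Rightarrow> (history \<Rightarrow> (bool list \<times> bool list) list \<Rightarrow> thinker) \<Rightarrow> nat \<Rightarrow> nat pmf \<Rightarrow> history
   \<Rightarrow> (history \<times> thinker \<times> real) pmf" where
  "boost_inner T M xs ys adv sel 0 D hist = return_pmf (hist, (\<lambda>_. False), 1)"
| "boost_inner T M xs ys adv sel (Suc n) D hist =
     bind_pmf (boost_try T M xs ys adv sel D hist)
       (\<lambda>(h', g, e). if e \<le> 1/4 \<or> n = 0 then return_pmf (h', g, e)
                     else boost_inner T M xs ys adv sel n D h')"

(* AdaBoost reweighting with alpha = 1/2 log((1-eps)/eps), normalized over [m] *)
definition boost_update ::
  "nat \<Rightarrow> nat \<Rightarrow> (nat \<Rightarrow> bool list) \<Rightarrow> (nat \<Rightarrow> bool) \<Rightarrow> nat pmf \<Rightarrow> thinker \<Rightarrow> real \<Rightarrow> nat pmf" where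
  "boost_update T m xs ys D g \<epsilon> =
     (let \<alpha> = ln ((1 - \<epsilon>) / \<epsilon>) / 2;
          w = (\<lambda>i. pmf D i * exp (if e2e T g (xs i) \<noteq> ys i then \<alpha> else - \<alpha>));
          Z = (\<Sum>j<m. w j)
      in embed_pmf (\<lambda>i. w i / Z))"

fun boost_outer ::
  "nat \<Rightarrow> nat \<Rightarrow> nat \<Rightarrow> (nat \<Rightarrow> bool list) \<Rightarrow> (nat \<Rightarrow> bool) \<Rightarrow> (history \<Rightarrow> nat list \<Rightarrow> thinker)
   \<Rightarrow> (history \<Rightarrow> (bool list \<times> bool list) list \<Rightarrow> thinker) \<Rightarrow> nat \<Rightarrow> nat \<Rightarrow> nat pmf \<Rightarrow> history
   \<Rightarrow> real list pmf" where
  "boost_outer T m M xs ys adv sel L 0 D hist = return_pmf []"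
| "boost_outer T m M xs ys adv sel L (Suc n) D hist =
     bind_pmf (boost_inner T M xs ys adv sel L D hist)
       (\<lambda>(h', g, e). if e = 0 then return_pmf [e]
                     else map_pmf (Cons e)
                            (boost_outer T m M xs ys adv sel L n (boost_update T m xs ys D g e) h'))"

(* the Boosting Algorithm: distribution of the list (eps_1, ..., eps_k) of rounds executed *)
definition boost ::
  "nat \<Rightarrow> nat \<Rightarrow> (nat \<Rightarrow> bool list) \<Rightarrow> (nat \<Rightarrow> bool) \<Rightarrow> nat \<Rightarrow> real \<Rightarrow> nat
   \<Rightarrow> (history \<Rightarrow> nat list \<Rightarrow> thinker) \<Rightarrow> (history \<Rightarrow> (bool list \<times> bool list) list \<Rightarrow> thinker)
   \<Rightarrow> real list pmf" where
  "boost T m xs ys K \<delta> M adv sel =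
     boost_outer T m M xs ys adv sel (nat \<lceil>ln (2 * real K / \<delta>)\<rceil>) K (pmf_of_set {..<m}) []"

end

theory Submission
  imports Defs "HOL-Combinatorics.Permutations"
begin


definition fshatters :: "'a set set \<Rightarrow> 'a set \<Rightarrow> bool" where
  "fshatters \<A> B \<longleftrightarrow> (\<forall>B'\<subseteq>B. \<exists>A\<in>\<A>. A \<inter> B = B')"

lemma pajor:
  assumes "finite C" "\<A> \<subseteq> Pow C"
  shows "card \<A> \<le> card {B. B \<subseteq> C \<and> fshatters \<A> B}"
  using assms
proof (induction C arbitrary: \<A> rule: finite_induct)
  case empty
  show ?case
  proof (cases "\<A> = {}")
    case True then show ?thesis by simp
  next
    case False
    then have "\<A> = {{}}" using empty by auto
    then have "{B. B \<subseteq> {} \<and> fshatters \<A> B} = {{}}"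
      by (auto simp: fshatters_def)
    then show ?thesis using \<open>\<A> = {{}}\<close> by simp
  qed
next
  case (insert x C)
  define N where "N = {A\<in>\<A>. x \<notin> A}"
  define R where "R = (\<lambda>A. A - {x}) ` {A\<in>\<A>. x \<in> A}"
  define A0 where "A0 = N \<union> R"
  define A1 where "A1 = N \<inter> R"
  have fin: "finite \<A>" using insert(1,4) finite_Pow_iff finite_subset
    by (metis finite.insertI)
  have A0sub: "A0 \<subseteq> Pow C" using insert(2,4) by (auto simp: A0_def N_def R_def)
  have A1sub: "A1 \<subseteq> Pow C" using A0sub by (auto simp: A0_def A1_def)
  have cR: "card R = card {A\<in>\<A>. x \<in> A}"
    unfolding R_def by (rule card_image) (auto simp: inj_on_def)
  have cA: "card \<A> = card N + card {A\<in>\<A>. x \<in> A}"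
  proof -
    have "\<A> = N \<union> {A\<in>\<A>. x \<in> A}" by (auto simp: N_def)
    moreover have "N \<inter> {A\<in>\<A>. x \<in> A} = {}" by (auto simp: N_def)
    ultimately show ?thesis using fin
      by (metis (no_types, lifting) card_Un_disjoint finite_Un)
  qed
  have finN: "finite N" "finite R" using fin by (auto simp: N_def R_def)
  have c01: "card A0 + card A1 = card \<A>"
    using card_Un_Int[OF finN] cR cA by (simp add: A0_def A1_def)
  define S where "S = {B. B \<subseteq> insert x C \<and> fshatters \<A> B}"
  define S0 where "S0 = {B. B \<subseteq> C \<and> fshatters A0 B}"
  define S1 where "S1 = {B. B \<subseteq> C \<and> fshatters A1 B}"
  have "S0 \<subseteq> S"
  proof
    fix B assume "B \<in> S0"
    then have B: "B \<subseteq> C" "fshatters A0 B" by (auto simp: S0_def)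
    have "fshatters \<A> B" unfolding fshatters_def
    proof (intro allI impI)
      fix B' assume "B' \<subseteq> B"
      then obtain A where "A \<in> A0" "A \<inter> B = B'" using B(2) by (auto simp: fshatters_def)
      then obtain A' where "A' \<in> \<A>" "A = A' - {x}" by (auto simp: A0_def N_def R_def)
      moreover have "x \<notin> B" using B insert(2) by auto
      ultimately show "\<exists>A\<in>\<A>. A \<inter> B = B'" using \<open>A \<inter> B = B'\<close> by (intro bexI[of _ A']) auto
    qed
    then show "B \<in> S" using B by (auto simp: S_def)
  qed
  moreover have "insert x ` S1 \<subseteq> S"
  proof
    fix B2 assume "B2 \<in> insert x ` S1"
    then obtain B where B: "B \<subseteq> C" "fshatters A1 B" "B2 = insert x B" by (auto simp: S1_def)
    have xB: "x \<notin> B" using B insert(2) by auto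
    have "fshatters \<A> (insert x B)" unfolding fshatters_def
    proof (intro allI impI)
      fix B'' assume B'': "B'' \<subseteq> insert x B"
      then obtain A where A: "A \<in> A1" "A \<inter> B = B'' - {x}" using B(2) unfolding fshatters_def
        by (metis Diff_subset_conv Int_commute insert_is_Un)
      have xA: "x \<notin> A" using A(1) by (auto simp: A1_def N_def)
      have inA: "A \<in> \<A>" "insert x A \<in> \<A>" using A(1) xA
        by (auto simp: A1_def N_def R_def insert_absorb)
      show "\<exists>A\<in>\<A>. A \<inter> insert x B = B''"
      proof (cases "x \<in> B''")
        case True
        then show ?thesis using inA A(2) B'' by (intro bexI[of _ "insert x A"]) auto
      next
        case False
        then show ?thesis using inA A(2) B'' xA by (intro bexI[of _ A]) auto
      qed
    qed
    then show "B2 \<in> S" using B by (auto simp: S_def)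
  qed
  moreover have "S0 \<inter> insert x ` S1 = {}" using insert(2) by (auto simp: S0_def S1_def)
  moreover have "finite S" using insert(1) by (auto simp: S_def)
  ultimately have "card S0 + card (insert x ` S1) \<le> card S"
    by (metis card_Un_disjoint card_mono finite_subset le_sup_iff)
  moreover have "card (insert x ` S1) = card S1"
    using insert(2) by (intro card_image) (auto simp: inj_on_def S1_def)
  moreover have "card A0 \<le> card S0" using insert(3)[OF A0sub] by (simp add: S0_def)
  moreover have "card A1 \<le> card S1" using insert(3)[OF A1sub] by (simp add: S1_def)
  ultimately show ?case using c01 by (simp add: S_def)
qed



definition trc :: "('a \<Rightarrow> bool) set \<Rightarrow> 'a set \<Rightarrow> 'a set set" where
  "trc H C = (\<lambda>h. {x\<in>C. h x}) ` H"

lemma fshatters_trc: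
  assumes "B \<subseteq> C" shows "fshatters (trc H C) B \<longleftrightarrow> shatters H B"
proof
  assume a: "fshatters (trc H C) B"
  show "shatters H B" unfolding shatters_def
  proof (intro allI impI)
    fix B' assume "B' \<subseteq> B"
    then obtain h where h: "h \<in> H" "{x \<in> C. h x} \<inter> B = B'" using a
      unfolding fshatters_def trc_def by blast
    have "\<forall>x\<in>B. h x = (x \<in> B')"
    proof
      fix x assume "x \<in> B" then show "h x = (x \<in> B')" using h(2) assms by blast
    qed
    then show "\<exists>h\<in>H. \<forall>x\<in>B. h x = (x \<in> B')" using h(1) by blast
  qed
next
  assume a: "shatters H B"
  show "fshatters (trc H C) B" unfolding fshatters_def
  proof (intro allI impI)
    fix B' assume "B' \<subseteq> B"
    then obtain h where h: "h \<in> H" "\<forall>x\<in>B. h x = (x \<in> B')" using a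
      unfolding shatters_def by blast
    have "{x \<in> C. h x} \<inter> B = B'" using h(2) assms \<open>B' \<subseteq> B\<close> by blast
    then show "\<exists>A\<in>trc H C. A \<inter> B = B'" using h(1) unfolding trc_def by blast
  qed
qed

lemma card_subsets_le:
  assumes "finite C"
  shows "card {B. B \<subseteq> C \<and> card B \<le> d} = (\<Sum>i\<le>d. card C choose i)"
proof -
  have eq: "{B. B \<subseteq> C \<and> card B \<le> d} = (\<Union>i\<le>d. {B. B \<subseteq> C \<and> card B = i})" by blast
  have "card (\<Union>i\<le>d. {B. B \<subseteq> C \<and> card B = i}) = (\<Sum>i\<le>d. card {B. B \<subseteq> C \<and> card B = i})"
    using assms by (intro card_UN_disjoint) auto
  then have "card {B. B \<subseteq> C \<and> card B \<le> d} = (\<Sum>i\<le>d. card {B. B \<subseteq> C \<and> card B = i})"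
    using eq by simp
  also have "\<dots> = (\<Sum>i\<le>d. card C choose i)" using n_subsets[OF assms] by simp
  finally show ?thesis .
qed

lemma sauer:
  assumes "finite C" "\<And>B. B \<subseteq> C \<Longrightarrow> shatters H B \<Longrightarrow> card B \<le> d"
  shows "card (trc H C) \<le> (\<Sum>i\<le>d. card C choose i)"
proof -
  have "card (trc H C) \<le> card {B. B \<subseteq> C \<and> fshatters (trc H C) B}"
    by (rule pajor[OF assms(1)]) (auto simp: trc_def)
  also have "\<dots> \<le> card {B. B \<subseteq> C \<and> card B \<le> d}"
    using assms by (intro card_mono) (auto simp: fshatters_trc)
  also have "\<dots> = (\<Sum>i\<le>d. card C choose i)" by (rule card_subsets_le[OF assms(1)])
  finally show ?thesis .
qed

lemma binom_sum_mono: "N \<le> N' \<Longrightarrow> (\<Sum>i\<le>d. N choose i) \<le> (\<Sum>i\<le>d. N' choose i)"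
  by (intro sum_mono binomial_right_mono)

lemma binom_sum_bound:
  assumes "1 \<le> d" "d \<le> N"
  shows "real (\<Sum>i\<le>d. N choose i) \<le> (exp 1 * N / d) ^ d"
proof -
  define x where "x = real d / N"
  have x: "0 < x" "x \<le> 1" using assms by (auto simp: x_def)
  have "x ^ d * real (\<Sum>i\<le>d. N choose i) = (\<Sum>i\<le>d. real (N choose i) * x ^ d)"
    by (simp add: sum_distrib_left mult.commute)
  also have "\<dots> \<le> (\<Sum>i\<le>d. real (N choose i) * x ^ i)"
    using x by (intro sum_mono mult_left_mono power_decreasing) auto
  also have "\<dots> \<le> (\<Sum>i\<le>N. real (N choose i) * x ^ i)"
    using assms x by (intro sum_mono2) auto
  also have "\<dots> = (x + 1) ^ N" by (simp add: binomial_ring mult.commute)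
  also have "\<dots> \<le> exp x ^ N"
    using x by (intro power_mono) (auto simp: add.commute exp_ge_add_one_self)
  also have "\<dots> = exp 1 ^ d" using assms by (simp add: x_def flip: exp_of_nat_mult)
  finally have "x ^ d * real (\<Sum>i\<le>d. N choose i) \<le> exp 1 ^ d" .
  then have "real (\<Sum>i\<le>d. N choose i) \<le> exp 1 ^ d / x ^ d"
    using x by (simp add: field_simps)
  also have "\<dots> = (exp 1 * N / d) ^ d" using assms by (simp add: x_def power_divide field_simps)
  finally show ?thesis .
qed

lemma VCdim_le:
  assumes "VCdim A H \<noteq> \<infinity>" "finite C" "C \<subseteq> A" "shatters H C"
  shows "card C \<le> the_enat (VCdim A H)"
proof -
  have "enat (card C) \<le> VCdim A H" unfolding VCdim_def
    using assms by (intro SUP_upper) auto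
  then show ?thesis using assms(1) by (cases "VCdim A H") auto
qed

lemma VCdim_bound:
  assumes "\<And>C. finite C \<Longrightarrow> C \<subseteq> A \<Longrightarrow> shatters H C \<Longrightarrow> card C \<le> n"
  shows "VCdim A H \<noteq> \<infinity>" "the_enat (VCdim A H) \<le> n"
proof -
  have "VCdim A H \<le> enat n" unfolding VCdim_def using assms by (intro SUP_least) auto
  then show "VCdim A H \<noteq> \<infinity>" "the_enat (VCdim A H) \<le> n"
    by (cases "VCdim A H"; auto)+
qed



lemma prob_bind_pmf:
  "measure_pmf.prob (bind_pmf p f) A = (\<integral>x. measure_pmf.prob (f x) A \<partial>p)"
proof -
  have "ennreal (measure_pmf.prob (bind_pmf p f) A) = emeasure (bind_pmf p f) A"
    by (simp add: measure_pmf.emeasure_eq_measure)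
  also have "\<dots> = (\<integral>\<^sup>+x. ennreal (measure_pmf.prob (f x) A) \<partial>p)"
    by (subst emeasure_bind_pmf) (simp add: measure_pmf.emeasure_eq_measure)
  also have "\<dots> = ennreal (\<integral>x. measure_pmf.prob (f x) A \<partial>p)"
    by (intro nn_integral_eq_integral measure_pmf.integrable_const_bound[where B=1]) auto
  finally show ?thesis by (simp add: ennreal_inj)
qed

lemma iid_replicate: "iid_pmf n D = replicate_pmf n D"
  by (induction n) (simp_all add: map_pmf_def)

lemma pmf_replicate:
  "pmf (replicate_pmf n D) xs = (if length xs = n then prod_list (map (pmf D) xs) else 0)"
proof (induction n arbitrary: xs)
  case 0
  then show ?case by (cases xs) (auto simp: pmf_return)
next
  case (Suc n)
  have eq: "replicate_pmf (Suc n) D = bind_pmf D (\<lambda>x. map_pmf (Cons x) (replicate_pmf n D))"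
    by (simp add: map_pmf_def)
  show ?case
  proof (cases xs)
    case Nil
    have "pmf (map_pmf (Cons x) (replicate_pmf n D)) [] = 0" for x
      by (auto simp: pmf_eq_0_set_pmf)
    then show ?thesis using Nil by (simp add: eq pmf_bind)
  next
    case (Cons y ys)
    have "pmf (map_pmf (Cons x) (replicate_pmf n D)) (y # ys) = indicator {y} x * pmf (replicate_pmf n D) ys" for x
    proof (cases "x = y")
      case True then show ?thesis by (simp add: pmf_map_inj' inj_on_def)
    next
      case False then show ?thesis by (auto simp: pmf_eq_0_set_pmf)
    qed
    note ind = this
    have "pmf (replicate_pmf (Suc n) D) xs = (\<integral>x. pmf (map_pmf (Cons x) (replicate_pmf n D)) (y # ys) \<partial>D)"
      by (simp only: eq pmf_bind Cons)
    also have "\<dots> = (\<integral>x. indicator {y} x * pmf (replicate_pmf n D) ys \<partial>D)"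
      by (rule Bochner_Integration.integral_cong[OF refl]) (rule ind)
    also have "\<dots> = pmf D y * pmf (replicate_pmf n D) ys"
      by (simp add: measure_pmf_single)
    finally show ?thesis using Suc Cons by simp
  qed
qed

definition swp :: "nat \<Rightarrow> nat set \<Rightarrow> nat \<Rightarrow> nat" where
  "swp M J i = (if i < M \<and> i \<in> J then i + M else if M \<le> i \<and> i < 2*M \<and> i - M \<in> J then i - M else i)"

definition swap :: "nat \<Rightarrow> nat set \<Rightarrow> 'a list \<Rightarrow> 'a list" where
  "swap M J w = (if length w = 2*M then permute_list (swp M J) w else w)"

lemma swp_swp: "swp M J (swp M J i) = i"
  by (auto simp: swp_def)

lemma swp_permutes: "swp M J permutes {..<2*M}"
proof (rule bij_imp_permutes)
  show "bij_betw (swp M J) {..<2 * M} {..<2 * M}"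
    by (rule bij_betw_byWitness[where f'="swp M J"]) (auto simp: swp_swp, auto simp: swp_def)
  show "\<And>x. x \<notin> {..<2 * M} \<Longrightarrow> swp M J x = x" by (auto simp: swp_def)
qed

lemma swp_nth: "length w = 2*M \<Longrightarrow> i < 2*M \<Longrightarrow> permute_list (swp M J) w ! i = w ! swp M J i"
  by (rule permute_list_nth) (simp_all add: swp_permutes)

lemma swap_swap: "swap M J (swap M J w) = w"
proof (cases "length w = 2*M")
  case True
  have "permute_list (swp M J) (permute_list (swp M J) w) = w"
  proof (rule nth_equalityI)
    fix i assume "i < length (permute_list (swp M J) (permute_list (swp M J) w))"
    then have i: "i < 2*M" using True by simp
    have "swp M J i < 2*M" using i by (auto simp: swp_def)
    then show "permute_list (swp M J) (permute_list (swp M J) w) ! i = w ! i"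
      using i True by (simp add: swp_nth swp_swp)
  qed simp
  then show ?thesis using True by (simp add: swap_def)
qed (simp add: swap_def)

lemma mset_swap: "mset (swap M J w) = mset w"
  by (simp add: swap_def swp_permutes)

lemma length_swap[simp]: "length (swap M J w) = length w"
  by (simp add: swap_def)

lemma swap_nth1: "length w = 2*M \<Longrightarrow> j < M \<Longrightarrow> swap M J w ! j = (if j \<in> J then w ! (M+j) else w ! j)"
  by (simp add: swap_def swp_nth swp_def add.commute)

lemma swap_nth2: "length w = 2*M \<Longrightarrow> j < M \<Longrightarrow> swap M J w ! (M+j) = (if j \<in> J then w ! j else w ! (M+j))"
  by (simp add: swap_def swp_nth swp_def)

lemma swap_invariant: "map_pmf (swap M J) (replicate_pmf n D) = replicate_pmf n D"
proof (rule pmf_eqI)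
  fix w
  have inj: "inj (swap M J)" by (metis injI swap_swap)
  have "pmf (map_pmf (swap M J) (replicate_pmf n D)) w =
        pmf (map_pmf (swap M J) (replicate_pmf n D)) (swap M J (swap M J w))" by (simp add: swap_swap)
  also have "\<dots> = pmf (replicate_pmf n D) (swap M J w)" by (rule pmf_map_inj'[OF inj])
  also have "\<dots> = pmf (replicate_pmf n D) w"
  proof -
    have "prod_list (map (pmf D) (swap M J w)) = prod_list (map (pmf D) w)"
      by (metis mset_map mset_swap prod_mset_prod_list)
    then show ?thesis by (simp add: pmf_replicate)
  qed
  finally show "pmf (map_pmf (swap M J) (replicate_pmf n D)) w = pmf (replicate_pmf n D) w" .
qed

lemma replicate_map: "replicate_pmf n (map_pmf g D) = map_pmf (map g) (replicate_pmf n D)"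
  by (induction n) (simp_all add: map_pmf_def bind_assoc_pmf bind_return_pmf)

lemma map_bool_bernoulli:
  "map_pmf g D = bernoulli_pmf (measure_pmf.prob D {x. g x})"
proof (rule pmf_eqI)
  fix b :: bool
  have p: "0 \<le> measure_pmf.prob D {x. g x}" "measure_pmf.prob D {x. g x} \<le> 1" by auto
  have c: "measure_pmf.prob D {x. \<not> g x} = 1 - measure_pmf.prob D {x. g x}"
  proof -
    have "{x. \<not> g x} = UNIV - {x. g x}" by auto
    then show ?thesis using measure_pmf.prob_compl[of "{x. g x}" D] by simp
  qed
  show "pmf (map_pmf g D) b = pmf (bernoulli_pmf (measure_pmf.prob D {x. g x})) b"
    using p c by (cases b) (auto simp: pmf_map vimage_def)
qed

lemma binomial_count:
  "map_pmf (\<lambda>v. length (filter g v)) (replicate_pmf n D) = binomial_pmf n (measure_pmf.prob D {x. g x})"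
proof -
  have "binomial_pmf n (measure_pmf.prob D {x. g x}) =
        map_pmf (length \<circ> filter id) (replicate_pmf n (map_pmf g D))"
    by (subst binomial_pmf_altdef) (auto simp: map_bool_bernoulli)
  also have "\<dots> = map_pmf (\<lambda>v. length (filter g v)) (replicate_pmf n D)"
    by (simp add: replicate_map pmf.map_comp o_def filter_map)
  finally show ?thesis by simp
qed



definition E2 :: "nat \<Rightarrow> nat \<Rightarrow> ('a \<Rightarrow> bool) set \<Rightarrow> 'a list set" where
  "E2 M k G = {w. length w = 2*M \<and> (\<exists>g\<in>G. (\<forall>j<M. \<not> g (w!j)) \<and> k \<le> card {j. j<M \<and> g (w!(M+j))})}"

definition E1 :: "'a pmf \<Rightarrow> ('a \<Rightarrow> bool) set \<Rightarrow> 'a list set" where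
  "E1 D G = {u. \<exists>g\<in>G. (\<forall>x\<in>set u. \<not> g x) \<and> 1/4 < measure_pmf.prob D {x. g x}}"

lemma count_J:
  assumes "finite U" "Q \<subseteq> U" "J0 \<subseteq> Q"
  shows "card {J. J \<subseteq> U \<and> J \<inter> Q = J0} = 2 ^ (card U - card Q)"
proof -
  have "bij_betw (\<lambda>J. J - Q) {J. J \<subseteq> U \<and> J \<inter> Q = J0} (Pow (U - Q))"
    by (rule bij_betw_byWitness[where f'="\<lambda>J'. J' \<union> J0"]) (use assms in auto)
  then have "card {J. J \<subseteq> U \<and> J \<inter> Q = J0} = card (Pow (U - Q))" by (rule bij_betw_same_card)
  also have "\<dots> = 2 ^ (card U - card Q)"
    using assms by (simp add: card_Pow card_Diff_subset finite_subset)
  finally show ?thesis .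
qed

lemma Bt_card:
  assumes w: "length w = 2*M"
  shows "card {J. J \<subseteq> {..<M} \<and> (\<forall>j<M. swap M J w ! j \<notin> t) \<and> k \<le> card {j. j<M \<and> swap M J w ! (M+j) \<in> t}}
         \<le> 2 ^ (M - k)" (is "card ?B \<le> _")
proof (cases "?B = {}")
  case True then show ?thesis by (simp only: True card.empty)
next
  case False
  define Q where "Q = {j. j<M \<and> (w!j \<in> t) \<noteq> (w!(M+j) \<in> t)}"
  define J0 where "J0 = {j\<in>Q. w!j \<in> t}"
  have sw1: "swap M J w ! j = (if j \<in> J then w ! (M+j) else w ! j)" if "j < M" for J j
    using swap_nth1[OF w that] .
  have sw2: "swap M J w ! (M+j) = (if j \<in> J then w ! j else w ! (M+j))" if "j < M" for J j
    using swap_nth2[OF w that] .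
  obtain J1 where J1: "J1 \<subseteq> {..<M}" "\<forall>j<M. swap M J1 w ! j \<notin> t"
      "k \<le> card {j. j<M \<and> swap M J1 w ! (M+j) \<in> t}" using False by blast
  have "{j. j<M \<and> swap M J1 w ! (M+j) \<in> t} \<subseteq> Q"
  proof
    fix j assume j: "j \<in> {j. j<M \<and> swap M J1 w ! (M+j) \<in> t}"
    then have jM: "j < M" and a: "swap M J1 w ! (M+j) \<in> t" by auto
    have b: "swap M J1 w ! j \<notin> t" using J1(2) jM by blast
    show "j \<in> Q"
    proof (cases "j \<in> J1")
      case True then show ?thesis using a b sw1[OF jM, of J1] sw2[OF jM, of J1] jM by (simp add: Q_def)
    next
      case False then show ?thesis using a b sw1[OF jM, of J1] sw2[OF jM, of J1] jM by (simp add: Q_def)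
    qed
  qed
  moreover have "finite Q" by (simp add: Q_def)
  ultimately have "card {j. j<M \<and> swap M J1 w ! (M+j) \<in> t} \<le> card Q" by (rule card_mono[rotated])
  then have "k \<le> card Q" using J1(3) by linarith
  have "?B \<subseteq> {J. J \<subseteq> {..<M} \<and> J \<inter> Q = J0}"
  proof
    fix J assume "J \<in> ?B"
    then have J: "J \<subseteq> {..<M}" "\<forall>j<M. swap M J w ! j \<notin> t" by auto
    have "J \<inter> Q = J0"
    proof (intro equalityI subsetI)
      fix x assume x: "x \<in> J \<inter> Q"
      then have xM: "x < M" by (simp add: Q_def)
      have "swap M J w ! x \<notin> t" using J(2) xM by blast
      then show "x \<in> J0" using x sw1[OF xM, of J] by (simp add: Q_def J0_def)
    next
      fix x assume x: "x \<in> J0"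
      then have xM: "x < M" by (simp add: Q_def J0_def)
      have "swap M J w ! x \<notin> t" using J(2) xM by blast
      then have "x \<in> J" using x sw1[OF xM, of J] by (cases "x \<in> J") (simp_all add: J0_def Q_def)
      then show "x \<in> J \<inter> Q" using x by (simp add: J0_def)
    qed
    then show "J \<in> {J. J \<subseteq> {..<M} \<and> J \<inter> Q = J0}" using J(1) by simp
  qed
  moreover have "finite {J. J \<subseteq> {..<M} \<and> J \<inter> Q = J0}"
    by (rule finite_subset[of _ "Pow {..<M}"]) auto
  ultimately have "card ?B \<le> card {J. J \<subseteq> {..<M} \<and> J \<inter> Q = J0}"
    by (intro card_mono)
  also have "\<dots> = 2 ^ (M - card Q)"
    by (subst count_J) (auto simp: Q_def J0_def)
  also have "\<dots> \<le> 2 ^ (M - k)" using \<open>k \<le> card Q\<close> by (intro power_increasing) auto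
  finally show ?thesis .
qed

lemma pointwise_bound:
  "card {J. J \<subseteq> {..<M} \<and> swap M J w \<in> E2 M k G} \<le> card (trc G (set w)) * 2 ^ (M - k)"
proof (cases "length w = 2*M")
  case False
  then have "{J. J \<subseteq> {..<M} \<and> swap M J w \<in> E2 M k G} = {}" by (auto simp: E2_def)
  then show ?thesis by (simp only: card.empty)
next
  case w: True
  define B where "B t = {J. J \<subseteq> {..<M} \<and> (\<forall>j<M. swap M J w ! j \<notin> t) \<and> k \<le> card {j. j<M \<and> swap M J w ! (M+j) \<in> t}}" for t
  have sub: "{J. J \<subseteq> {..<M} \<and> swap M J w \<in> E2 M k G} \<subseteq> (\<Union>t\<in>trc G (set w). B t)"
  proof
    fix J assume "J \<in> {J. J \<subseteq> {..<M} \<and> swap M J w \<in> E2 M k G}"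
    then obtain g where J: "J \<subseteq> {..<M}" "g \<in> G" "\<forall>j<M. \<not> g (swap M J w ! j)"
      "k \<le> card {j. j<M \<and> g (swap M J w ! (M+j))}" by (auto simp: E2_def)
    define t where "t = {x\<in>set w. g x}"
    have mem: "swap M J w ! i \<in> set w" if "i < 2*M" for i
      using that w by (metis length_swap nth_mem set_mset_mset mset_swap)
    have "\<forall>j<M. swap M J w ! j \<notin> t" using J(3) by (auto simp: t_def)
    moreover have "{j. j<M \<and> g (swap M J w ! (M+j))} = {j. j<M \<and> swap M J w ! (M+j) \<in> t}"
      using mem by (auto simp: t_def)
    ultimately have "J \<in> B t" using J by (auto simp: B_def)
    moreover have "t \<in> trc G (set w)" using J(2) by (auto simp: trc_def t_def)
    ultimately show "J \<in> (\<Union>t\<in>trc G (set w). B t)" by blast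
  qed
  have fin: "finite (trc G (set w))"
    by (rule finite_subset[of _ "Pow (set w)"]) (auto simp: trc_def)
  have "card {J. J \<subseteq> {..<M} \<and> swap M J w \<in> E2 M k G} \<le> card (\<Union>t\<in>trc G (set w). B t)"
  proof (intro card_mono sub finite_UN_I fin)
    fix t show "finite (B t)" unfolding B_def by (rule finite_subset[of _ "Pow {..<M}"]) auto
  qed
  also have "\<dots> \<le> (\<Sum>t\<in>trc G (set w). card (B t))" by (rule card_UN_le[OF fin])
  also have "\<dots> \<le> (\<Sum>t\<in>trc G (set w). 2 ^ (M - k))"
    by (intro sum_mono) (unfold B_def, rule Bt_card[OF w])
  also have "\<dots> = card (trc G (set w)) * 2 ^ (M - k)" by simp
  finally show ?thesis .
qed



lemma pmf_integrable_bounded: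
  fixes f :: "'a \<Rightarrow> real"
  assumes "\<And>x. \<bar>f x\<bar> \<le> B"
  shows "integrable (measure_pmf p) f"
  by (rule measure_pmf.integrable_const_bound[where B=B]) (use assms in auto)

lemma avg_bound:
  assumes bd: "\<And>w. real (card {J. J \<subseteq> {..<M} \<and> swap M J w \<in> A}) \<le> Bd"
  shows "2 ^ M * measure_pmf.prob (replicate_pmf n D) A \<le> Bd"
proof -
  let ?P = "replicate_pmf n D"
  define U where "U = Pow {..<M}"
  have finU: "finite U" by (simp add: U_def)
  have each: "measure_pmf.prob ?P A = measure_pmf.prob ?P {w. swap M J w \<in> A}" for J
  proof -
    have "measure_pmf.prob ?P A = measure_pmf.prob (map_pmf (swap M J) ?P) A"
      by (simp only: swap_invariant)
    also have "\<dots> = measure_pmf.prob ?P {w. swap M J w \<in> A}" by (simp add: vimage_def)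
    finally show ?thesis .
  qed
  have "real (card U) * measure_pmf.prob ?P A = (\<Sum>J\<in>U. measure_pmf.prob ?P {w. swap M J w \<in> A})"
    using each by simp
  also have "\<dots> = (\<Sum>J\<in>U. \<integral>w. indicator {w. swap M J w \<in> A} w \<partial>?P)"
    by simp
  also have "\<dots> = (\<integral>w. (\<Sum>J\<in>U. indicator {w. swap M J w \<in> A} w) \<partial>?P)"
    by (rule Bochner_Integration.integral_sum[symmetric]) (rule pmf_integrable_bounded[where B=1], simp add: indicator_def)
  also have "\<dots> = (\<integral>w. real (card {J. J \<subseteq> {..<M} \<and> swap M J w \<in> A}) \<partial>?P)"
  proof (rule Bochner_Integration.integral_cong[OF refl])
    fix w
    have "(\<Sum>J\<in>U. indicator {w. swap M J w \<in> A} w :: real) = (\<Sum>J\<in>{J\<in>U. swap M J w \<in> A}. 1)"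
      using finU by (simp add: sum.inter_filter indicator_def Int_def conj_commute)
    also have "{J\<in>U. swap M J w \<in> A} = {J. J \<subseteq> {..<M} \<and> swap M J w \<in> A}" by (auto simp: U_def)
    finally show "(\<Sum>J\<in>U. indicator {w. swap M J w \<in> A} w) = real (card {J. J \<subseteq> {..<M} \<and> swap M J w \<in> A})"
      by simp
  qed
  also have "\<dots> \<le> Bd"
  proof (rule measure_pmf.integral_le_const)
    have "card {J. J \<subseteq> {..<M} \<and> swap M J w \<in> A} \<le> card U" for w
      using finU by (intro card_mono) (auto simp: U_def)
    then show "integrable (measure_pmf ?P) (\<lambda>w. real (card {J. J \<subseteq> {..<M} \<and> swap M J w \<in> A}))"
      by (intro pmf_integrable_bounded[where B="real (card U)"]) auto
    show "AE x in measure_pmf ?P. real (card {J. J \<subseteq> {..<M} \<and> swap M J x \<in> A}) \<le> Bd"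
      using bd by simp
  qed
  finally show ?thesis by (simp add: U_def card_Pow)
qed

lemma hoeffding_quarter:
  assumes p: "1/4 < p" "p \<le> 1" and M: "160 \<le> M" and k: "8 * k \<le> M"
  shows "1/2 \<le> measure_pmf.prob (binomial_pmf M p) {x. k \<le> x}"
proof -
  have bd: "binomial_distribution p" using p by (simp add: binomial_distribution_def)
  have "measure_pmf.prob (binomial_pmf M p) {x. real x \<le> real M * p - real M / 8} \<le> exp (- 2 * (real M / 8)\<^sup>2 / real M)"
    by (rule binomial_distribution.prob_le[OF bd]) (use M in auto)
  also have "\<dots> = exp (- (real M / 32))" using M by (simp add: power2_eq_square field_simps)
  also have "\<dots> \<le> exp (-5)" using M by simp
  also have "\<dots> \<le> 1/2"
  proof -
    have "2 \<le> exp (5::real)" using exp_ge_add_one_self[of 5] by simp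
    then show ?thesis by (simp add: exp_minus field_simps)
  qed
  finally have a: "measure_pmf.prob (binomial_pmf M p) {x. real x \<le> real M * p - real M / 8} \<le> 1/2" .
  have "{x. \<not> k \<le> x} \<subseteq> {x. real x \<le> real M * p - real M / 8}"
  proof
    fix x assume "x \<in> {x. \<not> k \<le> x}"
    then have "real x < real k" by simp
    also have "real k \<le> real M / 8" using k by simp
    also have "real M / 8 \<le> real M * p - real M / 8" using p M by (simp add: field_simps)
    finally show "x \<in> {x. real x \<le> real M * p - real M / 8}" by simp
  qed
  then have "measure_pmf.prob (binomial_pmf M p) {x. \<not> k \<le> x} \<le> measure_pmf.prob (binomial_pmf M p) {x. real x \<le> real M * p - real M / 8}"
    by (rule measure_pmf.finite_measure_mono) auto
  then have "measure_pmf.prob (binomial_pmf M p) {x. \<not> k \<le> x} \<le> 1/2" using a by linarith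
  moreover have "measure_pmf.prob (binomial_pmf M p) {x. \<not> k \<le> x} = 1 - measure_pmf.prob (binomial_pmf M p) {x. k \<le> x}"
  proof -
    have "{x. \<not> k \<le> x} = UNIV - {x. k \<le> x}" by auto
    then show ?thesis using measure_pmf.prob_compl[of "{x. k \<le> x}" "binomial_pmf M p"] by simp
  qed
  ultimately show ?thesis by simp
qed



lemma step1:
  assumes M: "160 \<le> M" "8*k \<le> M"
  shows "measure_pmf.prob (replicate_pmf M D) (E1 D G) \<le> 2 * measure_pmf.prob (replicate_pmf (2*M) D) (E2 M k G)"
proof -
  let ?P = "replicate_pmf M D"
  have split: "replicate_pmf (2*M) D = bind_pmf ?P (\<lambda>u. map_pmf ((@) u) ?P)"
    using replicate_pmf_distrib[of M M D] by (simp add: map_pmf_def mult_2)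
  have P2: "measure_pmf.prob (replicate_pmf (2*M) D) (E2 M k G) = (\<integral>u. measure_pmf.prob ?P {v. u @ v \<in> E2 M k G} \<partial>?P)"
    by (simp add: split prob_bind_pmf vimage_def)
  have low: "(1/2::real) * indicator (E1 D G) u \<le> measure_pmf.prob ?P {v. u @ v \<in> E2 M k G}" if u: "u \<in> set_pmf ?P" for u
  proof (cases "u \<in> E1 D G")
    case False then show ?thesis by simp
  next
    case True
    then obtain g where g: "g \<in> G" "\<forall>x\<in>set u. \<not> g x" "1/4 < measure_pmf.prob D {x. g x}"
      by (auto simp: E1_def)
    have lu: "length u = M" using u by (simp add: set_replicate_pmf)
    have sub: "{v. k \<le> length (filter g v)} \<inter> set_pmf ?P \<subseteq> {v. u @ v \<in> E2 M k G}"
    proof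
      fix v assume v: "v \<in> {v. k \<le> length (filter g v)} \<inter> set_pmf ?P"
      then have lv: "length v = M" by (simp add: set_replicate_pmf)
      have "\<forall>j<M. \<not> g ((u @ v) ! j)" using g(2) lu by (simp add: nth_append)
      moreover have "{j. j<M \<and> g ((u @ v) ! (M+j))} = {j. j < length v \<and> g (v ! j)}"
        using lu lv by (auto simp: nth_append)
      moreover have "length (filter g v) = card {j. j < length v \<and> g (v ! j)}"
        by (rule length_filter_conv_card)
      ultimately have "k \<le> card {j. j<M \<and> g ((u @ v) ! (M+j))}" using v by simp
      then have "u @ v \<in> E2 M k G" unfolding E2_def using lu lv g(1) \<open>\<forall>j<M. \<not> g ((u @ v) ! j)\<close>
        by (intro CollectI conjI bexI[of _ g]) simp_all
      then show "v \<in> {v. u @ v \<in> E2 M k G}" by simp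
    qed
    have "1/2 \<le> measure_pmf.prob (binomial_pmf M (measure_pmf.prob D {x. g x})) {x. k \<le> x}"
      by (rule hoeffding_quarter) (use g M in auto)
    also have "\<dots> = measure_pmf.prob ?P {v. k \<le> length (filter g v)}"
      by (simp flip: binomial_count add: vimage_def)
    also have "\<dots> = measure_pmf.prob ?P ({v. k \<le> length (filter g v)} \<inter> set_pmf ?P)"
      by (simp add: measure_Int_set_pmf)
    also have "\<dots> \<le> measure_pmf.prob ?P {v. u @ v \<in> E2 M k G}"
      by (rule measure_pmf.finite_measure_mono[OF sub]) simp
    finally show ?thesis using True by simp
  qed
  have "(1/2) * measure_pmf.prob ?P (E1 D G) = (\<integral>u. (1/2::real) * indicator (E1 D G) u \<partial>?P)"
    by simp
  also have "\<dots> \<le> (\<integral>u. measure_pmf.prob ?P {v. u @ v \<in> E2 M k G} \<partial>?P)"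
  proof (rule integral_mono_AE)
    show "integrable (measure_pmf ?P) (\<lambda>u. (1/2::real) * indicator (E1 D G) u)"
      by (rule pmf_integrable_bounded[where B=1]) (simp add: indicator_def)
    show "integrable (measure_pmf ?P) (\<lambda>u. measure_pmf.prob ?P {v. u @ v \<in> E2 M k G})"
      by (rule pmf_integrable_bounded[where B=1]) simp
    show "AE u in measure_pmf ?P. (1/2::real) * indicator (E1 D G) u \<le> measure_pmf.prob ?P {v. u @ v \<in> E2 M k G}"
      using low by (simp add: AE_measure_pmf_iff)
  qed
  finally show ?thesis using P2 by simp
qed



lemma eps_net:
  assumes sh: "\<And>B. finite B \<Longrightarrow> shatters G B \<Longrightarrow> card B \<le> d"
    and F0: "(\<lambda>_. False) \<in> G"
  shows "measure_pmf.prob (replicate_pmf (160*d) D) (E1 D G) \<le> exp (-1)"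
proof (cases "d = 0")
  case True
  have "\<not> g x" if "g \<in> G" for g x
  proof
    assume gx: "g x"
    have "shatters G {x}" unfolding shatters_def
    proof (intro allI impI)
      fix B' assume "B' \<subseteq> {x}"
      then have "B' = {} \<or> B' = {x}" by blast
      then show "\<exists>h\<in>G. \<forall>y\<in>{x}. h y = (y \<in> B')"
        using F0 that gx by auto
    qed
    then show False using sh[of "{x}"] True by simp
  qed
  then have emp: "{x. g x} = {}" if "g \<in> G" for g using that by auto
  have "u \<notin> E1 D G" for u
  proof
    assume "u \<in> E1 D G"
    then obtain g where "g \<in> G" "1/4 < measure_pmf.prob D {x. g x}" unfolding E1_def by blast
    then show False using emp[of g] by simp
  qed
  then have "E1 D G = {}" by blast
  then show ?thesis by simp
next
  case False
  then have d1: "1 \<le> d" by simp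
  define M where "M = 160 * d"
  define k where "k = 20 * d"
  define S where "S = (\<Sum>i\<le>d. (2*M) choose i)"
  have Mk: "M - k = 140 * d" by (simp add: M_def k_def)
  have s1: "measure_pmf.prob (replicate_pmf M D) (E1 D G) \<le> 2 * measure_pmf.prob (replicate_pmf (2*M) D) (E2 M k G)"
    by (rule step1) (use d1 in \<open>auto simp: M_def k_def\<close>)
  have pw: "real (card {J. J \<subseteq> {..<M} \<and> swap M J w \<in> E2 M k G}) \<le> real S * 2 ^ (M - k)" for w
  proof (cases "length w = 2*M")
    case False
    then have "{J. J \<subseteq> {..<M} \<and> swap M J w \<in> E2 M k G} = {}" by (auto simp: E2_def)
    then show ?thesis by (simp only: card.empty) simp
  next
    case True
    have "card (trc G (set w)) \<le> (\<Sum>i\<le>d. card (set w) choose i)"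
    proof (rule sauer)
      fix B assume "B \<subseteq> set w" "shatters G B"
      then show "card B \<le> d" using sh[of B] finite_subset[of B "set w"] by simp
    qed simp
    also have "\<dots> \<le> S" unfolding S_def
      by (rule binom_sum_mono) (metis True card_length)
    finally have cS: "card (trc G (set w)) \<le> S" .
    have "card {J. J \<subseteq> {..<M} \<and> swap M J w \<in> E2 M k G} \<le> card (trc G (set w)) * 2 ^ (M - k)"
      by (rule pointwise_bound)
    also have "\<dots> \<le> S * 2 ^ (M - k)" using cS by (rule mult_le_mono1)
    finally have "real (card {J. J \<subseteq> {..<M} \<and> swap M J w \<in> E2 M k G}) \<le> real (S * 2 ^ (M - k))"
      by (simp only: of_nat_le_iff)
    then show ?thesis by simp
  qed
  have "2 ^ M * measure_pmf.prob (replicate_pmf (2*M) D) (E2 M k G) \<le> real S * 2 ^ (M - k)"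
    by (rule avg_bound) (rule pw)
  then have s2: "measure_pmf.prob (replicate_pmf (2*M) D) (E2 M k G) \<le> real S / 2 ^ k"
  proof -
    let ?p = "measure_pmf.prob (replicate_pmf (2*M) D) (E2 M k G)"
    have "(2::real) ^ M = 2 ^ (M - k) * 2 ^ k" by (simp add: M_def k_def flip: power_add)
    then have "2 ^ (M - k) * (2 ^ k * ?p) = 2 ^ M * ?p" by (simp only: mult.assoc)
    also have "\<dots> \<le> real S * 2 ^ (M - k)" by fact
    also have "\<dots> = 2 ^ (M - k) * real S" by (rule mult.commute)
    finally have "2 ^ (M - k) * (2 ^ k * ?p) \<le> 2 ^ (M - k) * real S" .
    then have "2 ^ k * ?p \<le> real S" by (rule mult_left_le_imp_le) simp
    then show ?thesis by (simp add: pos_le_divide_eq mult.commute)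
  qed
  have s3: "real S \<le> (exp 1 * 320) ^ d"
  proof -
    have "real S \<le> (exp 1 * real (2*M) / d) ^ d" unfolding S_def
      by (rule binom_sum_bound) (use d1 in \<open>auto simp: M_def\<close>)
    also have "exp 1 * real (2*M) / d = exp 1 * 320" using d1 by (simp add: M_def)
    finally show ?thesis .
  qed
  have e3: "exp (1::real) \<le> 3" by (rule exp_le)
  have epos: "0 < exp (1::real)" by simp
  have q: "exp 1 * 320 / 2^20 \<le> (1::real)"
    using e3 by simp
  have "measure_pmf.prob (replicate_pmf M D) (E1 D G) \<le> 2 * ((exp 1 * 320) ^ d / (2^20) ^ d)"
  proof -
    have "(2::real) ^ k = (2^20) ^ d" by (simp add: k_def power_mult)
    moreover have "real S / 2 ^ k \<le> (exp 1 * 320) ^ d / 2 ^ k" by (rule divide_right_mono[OF s3]) simp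
    ultimately show ?thesis using s1 s2 by simp
  qed
  also have "\<dots> = 2 * (exp 1 * 320 / 2^20) ^ d" by (simp only: power_divide)
  also have "\<dots> \<le> 2 * (exp 1 * 320 / 2^20) ^ 1"
    using q d1 by (intro mult_left_mono power_decreasing) auto
  also have "\<dots> \<le> exp (-1)"
  proof -
    have "exp 1 * exp 1 \<le> (3::real) * 3" using e3 epos by (intro mult_mono) auto
    then have "2 * (exp 1 * 320 / 2^20) * exp 1 \<le> (1::real)" by (simp add: field_simps)
    then show ?thesis by (simp add: exp_minus field_simps)
  qed
  finally show ?thesis by (simp add: M_def)
qed



lemma e2e_Suc: "e2e (Suc t) f x = f ((fbar f ^^ t) x)"
  by (simp add: e2e_def fbar_def)

lemma CoT_Suc: "CoT (Suc t) f x = CoT t f x @ [f ((fbar f ^^ t) x)]"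
  by (simp add: CoT_def e2e_Suc)

lemma fbar_pow: "(fbar f ^^ t) x = x @ CoT t f x"
proof (induction t)
  case 0 then show ?case by (simp add: CoT_def)
next
  case (Suc t)
  have "(fbar f ^^ Suc t) x = fbar f ((fbar f ^^ t) x)" by simp
  also have "\<dots> = fbar f (x @ CoT t f x)" by (simp only: Suc.IH)
  also have "\<dots> = x @ CoT (Suc t) f x" by (simp add: fbar_def CoT_Suc Suc.IH)
  finally show ?case .
qed

lemma CoT_Suc': "CoT (Suc t) f x = CoT t f x @ [f (x @ CoT t f x)]"
  by (simp add: CoT_Suc fbar_pow)

lemma length_CoT[simp]: "length (CoT T f x) = T"
  by (simp add: CoT_def)

lemma e2e_eq_of_CoT:
  assumes "CoT T g x = CoT T f x" shows "e2e T g x = e2e T f x"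
proof (cases T)
  case 0 then show ?thesis by (simp add: e2e_def)
next
  case (Suc t)
  then have "last (CoT T g x) = e2e T g x" "last (CoT T f x) = e2e T f x"
    by (simp_all add: CoT_Suc e2e_Suc)
  then show ?thesis using assms by metis
qed

lemma CoT_iff:
  "length z = T \<Longrightarrow> (CoT T g x = z \<longleftrightarrow> (\<forall>t<T. g (x @ take t z) = z ! t))"
proof (induction T arbitrary: z)
  case 0 then show ?case by (simp add: CoT_def)
next
  case (Suc T)
  obtain z0 b where z: "z = z0 @ [b]" using Suc.prems
    by (metis append_butlast_last_id length_0_conv nat.simps(3))
  have lz0: "length z0 = T" using Suc.prems z by simp
  have "CoT (Suc T) g x = z \<longleftrightarrow> CoT T g x = z0 \<and> g (x @ z0) = b"
    unfolding CoT_Suc' z by auto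
  also have "\<dots> \<longleftrightarrow> (\<forall>t<T. g (x @ take t z0) = z0 ! t) \<and> g (x @ z0) = b"
    using Suc.IH[OF lz0] by simp
  also have "\<dots> \<longleftrightarrow> (\<forall>t<Suc T. g (x @ take t z) = z ! t)"
  proof -
    have "\<forall>t<T. take t z = take t z0 \<and> z ! t = z0 ! t" using lz0 by (simp add: z nth_append)
    moreover have "take T z = z0" "z ! T = b" using lz0 by (simp_all add: z lz0[symmetric])
    ultimately show ?thesis by (auto simp: less_Suc_eq)
  qed
  finally show ?case .
qed

lemma update_supp:
  assumes supp: "set_pmf D \<subseteq> {..<m}"
  shows "set_pmf (boost_update T m xs ys D g e) \<subseteq> {..<m}"
proof -
  define \<alpha> where "\<alpha> = ln ((1 - e) / e) / 2"
  define w where "w = (\<lambda>i. pmf D i * exp (if e2e T g (xs i) \<noteq> ys i then \<alpha> else - \<alpha>))"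
  define Z where "Z = (\<Sum>j<m. w j)"
  have w0: "0 \<le> w i" for i by (simp add: w_def)
  have wout: "w i = 0" if "i \<notin> {..<m}" for i
    using supp that by (auto simp: w_def set_pmf_iff)
  obtain j where j: "j \<in> set_pmf D" using set_pmf_not_empty[of D] by auto
  have "0 < w j" using j by (simp add: w_def set_pmf_iff pmf_nonneg order.strict_iff_order)
  moreover have "j < m" using j supp by auto
  ultimately have Zpos: "0 < Z" unfolding Z_def
    by (intro sum_pos2[where i=j]) (auto simp: w0)
  have nn: "\<And>x. 0 \<le> w x / Z" using w0 Zpos by simp
  have "(\<integral>\<^sup>+x. ennreal (w x / Z) \<partial>count_space UNIV) = (\<Sum>x\<in>{..<m}. ennreal (w x / Z))"
    by (rule nn_integral_count_space') (auto simp: wout)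
  also have "\<dots> = ennreal (\<Sum>x\<in>{..<m}. w x / Z)" using nn by simp
  also have "(\<Sum>x\<in>{..<m}. w x / Z) = 1" using Zpos by (simp add: Z_def flip: sum_divide_distrib)
  finally have one: "(\<integral>\<^sup>+x. ennreal (w x / Z) \<partial>count_space UNIV) = 1" by simp
  have "boost_update T m xs ys D g e = embed_pmf (\<lambda>i. w i / Z)"
    unfolding boost_update_def Let_def w_def Z_def \<alpha>_def by (rule refl)
  moreover have "set_pmf (embed_pmf (\<lambda>i. w i / Z)) = {x. w x / Z \<noteq> 0}"
    by (rule set_embed_pmf[OF nn one])
  ultimately show ?thesis using wout by auto
qed



lemma inner_bound:
  assumes tryb: "\<And>D hist. set_pmf D \<subseteq> {..<m} \<Longrightarrow>
      measure_pmf.prob (boost_try T M xs ys adv sel D hist) {r. 1/4 < snd (snd r)} \<le> q"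
    and supp: "set_pmf D \<subseteq> {..<m}"
  shows "measure_pmf.prob (boost_inner T M xs ys adv sel (Suc n) D hist) {r. 1/4 < snd (snd r)} \<le> q ^ Suc n"
  using supp
proof (induction n arbitrary: hist)
  case 0
  have "boost_inner T M xs ys adv sel (Suc 0) D hist = bind_pmf (boost_try T M xs ys adv sel D hist) return_pmf"
    by (simp add: case_prod_beta')
  then show ?case using tryb[OF 0] by (simp add: bind_return_pmf')
next
  case (Suc n)
  let ?B = "{r :: history \<times> thinker \<times> real. 1/4 < snd (snd r)}"
  let ?F = "\<lambda>(h', g, e). if e \<le> 1/4 \<or> Suc n = 0 then return_pmf (h', g, e)
                     else boost_inner T M xs ys adv sel (Suc n) D h'"
  have eq: "boost_inner T M xs ys adv sel (Suc (Suc n)) D hist = bind_pmf (boost_try T M xs ys adv sel D hist) ?F"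
    by simp
  have pw: "measure_pmf.prob (?F r) ?B \<le> indicator ?B r * q ^ Suc n" for r
  proof -
    obtain h' g e where r: "r = (h', g, e)" by (cases r) auto
    show ?thesis
    proof (cases "e \<le> 1/4")
      case True then show ?thesis by (simp add: r)
    next
      case False
      then show ?thesis using Suc.IH[OF Suc.prems, of h'] by (simp add: r)
    qed
  qed
  have qn: "0 \<le> q ^ Suc n"
  proof -
    have "0 \<le> measure_pmf.prob (boost_inner T M xs ys adv sel (Suc n) D hist) ?B" by simp
    then show ?thesis using Suc.IH[OF Suc.prems, of hist] by linarith
  qed
  have "measure_pmf.prob (boost_inner T M xs ys adv sel (Suc (Suc n)) D hist) ?B
        = (\<integral>r. measure_pmf.prob (?F r) ?B \<partial>boost_try T M xs ys adv sel D hist)"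
    by (simp only: eq prob_bind_pmf)
  also have "\<dots> \<le> (\<integral>r. indicator ?B r * q ^ Suc n \<partial>boost_try T M xs ys adv sel D hist)"
  proof (rule integral_mono)
    show "integrable (measure_pmf (boost_try T M xs ys adv sel D hist)) (\<lambda>r. measure_pmf.prob (?F r) ?B)"
      by (rule pmf_integrable_bounded[where B=1]) simp
    show "integrable (measure_pmf (boost_try T M xs ys adv sel D hist)) (\<lambda>r. indicator ?B r * q ^ Suc n)"
      by (rule pmf_integrable_bounded[where B="\<bar>q ^ Suc n\<bar>"]) (simp add: indicator_def abs_mult)
  qed (rule pw)
  also have "\<dots> = measure_pmf.prob (boost_try T M xs ys adv sel D hist) ?B * q ^ Suc n"
    by simp
  also have "\<dots> \<le> q * q ^ Suc n"
    by (rule mult_right_mono[OF tryb[OF Suc.prems] qn])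
  finally show ?case by simp
qed

lemma outer_bound:
  assumes inner: "\<And>D hist. set_pmf D \<subseteq> {..<m} \<Longrightarrow>
      measure_pmf.prob (boost_inner T M xs ys adv sel L D hist) {r. 1/4 < snd (snd r)} \<le> p"
    and supp: "set_pmf D \<subseteq> {..<m}"
  shows "measure_pmf.prob (boost_outer T m M xs ys adv sel L n D hist) {es. \<exists>e\<in>set es. 1/4 < e} \<le> real n * p"
  using supp
proof (induction n arbitrary: D hist)
  case 0 then show ?case by simp
next
  case (Suc n)
  let ?B = "{es :: real list. \<exists>e\<in>set es. 1/4 < e}"
  let ?R = "{r :: history \<times> thinker \<times> real. 1/4 < snd (snd r)}"
  let ?I = "boost_inner T M xs ys adv sel L D hist"
  let ?F = "\<lambda>(h', g, e). if e = 0 then return_pmf [e]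
                     else map_pmf (Cons e) (boost_outer T m M xs ys adv sel L n (boost_update T m xs ys D g e) h')"
  have eq: "boost_outer T m M xs ys adv sel L (Suc n) D hist = bind_pmf ?I ?F"
    by simp
  have pw: "measure_pmf.prob (?F r) ?B \<le> indicator ?R r + real n * p" for r
  proof -
    obtain h' g e where r: "r = (h', g, e)" by (cases r) auto
    have np: "0 \<le> real n * p"
    proof -
      have "0 \<le> measure_pmf.prob ?I ?R" by simp
      then have "0 \<le> p" using inner[OF Suc.prems, of hist] by linarith
      then show ?thesis by simp
    qed
    show ?thesis
    proof (cases "e = 0")
      case True then show ?thesis using np by (simp add: r)
    next
      case False
      let ?O = "boost_outer T m M xs ys adv sel L n (boost_update T m xs ys D g e) h'"
      have IH: "measure_pmf.prob ?O ?B \<le> real n * p"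
        by (rule Suc.IH) (rule update_supp[OF Suc.prems])
      have "measure_pmf.prob (?F r) ?B = measure_pmf.prob ?O {es. e # es \<in> ?B}"
        using False by (simp add: r vimage_def)
      also have "\<dots> \<le> indicator ?R r + real n * p"
      proof (cases "1/4 < e")
        case True
        have "measure_pmf.prob ?O {es. e # es \<in> ?B} \<le> 1" by simp
        then show ?thesis using True np by (simp add: r)
      next
        case nt: False
        then have "{es. e # es \<in> ?B} = ?B" by auto
        then show ?thesis using IH nt by (simp add: r)
      qed
      finally show ?thesis .
    qed
  qed
  have "measure_pmf.prob (boost_outer T m M xs ys adv sel L (Suc n) D hist) ?B
        = (\<integral>r. measure_pmf.prob (?F r) ?B \<partial>?I)"
    by (simp only: eq prob_bind_pmf)
  also have "\<dots> \<le> (\<integral>r. indicator ?R r + real n * p \<partial>?I)"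
  proof (rule integral_mono)
    show "integrable (measure_pmf ?I) (\<lambda>r. measure_pmf.prob (?F r) ?B)"
      by (rule pmf_integrable_bounded[where B=1]) simp
    show "integrable (measure_pmf ?I) (\<lambda>r. indicator ?R r + real n * p)"
      by (rule pmf_integrable_bounded[where B="1 + \<bar>real n * p\<bar>"]) (auto simp: indicator_def intro: order.trans[OF abs_triangle_ineq])
  qed (rule pw)
  also have "\<dots> = measure_pmf.prob ?I ?R + real n * p"
    by (subst Bochner_Integration.integral_add) (auto intro: pmf_integrable_bounded[where B=1] simp: indicator_def)
  also have "\<dots> \<le> p + real n * p" using inner[OF Suc.prems] by simp
  finally show ?case by (simp add: algebra_simps)
qed



lemma try_from_E1:
  assumes key: "\<And>S. S \<in> set_pmf (replicate_pmf M D) \<Longrightarrow>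
      1/4 < e2e_err T xs ys D (sel hist (map (\<lambda>i. (xs i, CoT T (adv hist S) (xs i))) S)) \<Longrightarrow> S \<in> E1 D G"
    and eps: "measure_pmf.prob (replicate_pmf M D) (E1 D G) \<le> q"
  shows "measure_pmf.prob (boost_try T M xs ys adv sel D hist) {r. 1/4 < snd (snd r)} \<le> q"
proof -
  let ?P = "replicate_pmf M D"
  let ?X = "{S. 1/4 < e2e_err T xs ys D (sel hist (map (\<lambda>i. (xs i, CoT T (adv hist S) (xs i))) S))}"
  have "measure_pmf.prob (boost_try T M xs ys adv sel D hist) {r. 1/4 < snd (snd r)} = measure_pmf.prob ?P ?X"
    by (simp add: boost_try_def iid_replicate Let_def vimage_def)
  also have "\<dots> = measure_pmf.prob ?P (?X \<inter> set_pmf ?P)" by (simp add: measure_Int_set_pmf)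
  also have "\<dots> \<le> measure_pmf.prob ?P (E1 D G)"
    by (rule measure_pmf.finite_measure_mono) (use key in auto)
  finally show ?thesis using eps by linarith
qed

lemma boost_final:
  assumes tryb: "\<And>D hist. set_pmf D \<subseteq> {..<m} \<Longrightarrow>
      measure_pmf.prob (boost_try T M xs ys adv sel D hist) {r. 1/4 < snd (snd r)} \<le> exp (-1)"
    and m: "0 < m" and \<delta>: "0 < \<delta>" "\<delta> < 1"
  shows "1 - \<delta> / 2 \<le> measure_pmf.prob (boost T m xs ys K \<delta> M adv sel) {es. \<forall>e\<in>set es. e \<le> 1/4}"
proof -
  define L where "L = nat \<lceil>ln (2 * real K / \<delta>)\<rceil>"
  let ?D0 = "pmf_of_set {..<m} :: nat pmf"
  have supp0: "set_pmf ?D0 \<subseteq> {..<m}" using m by (subst set_pmf_of_set) auto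
  let ?B = "{es :: real list. \<exists>e\<in>set es. 1/4 < e}"
  have compl: "measure_pmf.prob (boost T m xs ys K \<delta> M adv sel) {es. \<forall>e\<in>set es. e \<le> 1/4}
      = 1 - measure_pmf.prob (boost T m xs ys K \<delta> M adv sel) ?B"
  proof -
    have "{es :: real list. \<forall>e\<in>set es. e \<le> 1/4} = UNIV - ?B" by (auto simp: not_less)
    then show ?thesis using measure_pmf.prob_compl[of ?B "boost T m xs ys K \<delta> M adv sel"] by simp
  qed
  show ?thesis
  proof (cases "K = 0")
    case True
    then have "boost T m xs ys K \<delta> M adv sel = return_pmf []" by (simp add: boost_def)
    then show ?thesis using \<delta> by simp
  next
    case False
    have pos: "1 < 2 * real K / \<delta>" using False \<delta> by (simp add: field_simps)
    then have "0 < ln (2 * real K / \<delta>)" by simp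
    then have L1: "1 \<le> L" unfolding L_def by linarith
    then obtain L' where L': "L = Suc L'" by (cases L) auto
    have Lge: "ln (2 * real K / \<delta>) \<le> real L" unfolding L_def by linarith
    have inner: "measure_pmf.prob (boost_inner T M xs ys adv sel L D hist) {r. 1/4 < snd (snd r)} \<le> exp (-1) ^ L"
      if "set_pmf D \<subseteq> {..<m}" for D hist
      unfolding L' by (rule inner_bound[OF tryb that])
    have "measure_pmf.prob (boost T m xs ys K \<delta> M adv sel) ?B \<le> real K * exp (-1) ^ L"
      unfolding boost_def L_def[symmetric] by (rule outer_bound[OF inner supp0])
    also have "exp (-1) ^ L = exp (- real L)" by (simp flip: exp_of_nat_mult)
    also have "\<dots> \<le> exp (- ln (2 * real K / \<delta>))" using Lge by simp
    also have "\<dots> = \<delta> / (2 * real K)" using pos \<delta> by (simp add: exp_minus)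
    finally have "measure_pmf.prob (boost T m xs ys K \<delta> M adv sel) ?B \<le> real K * (\<delta> / (2 * real K))"
      by (simp add: mult_left_mono)
    also have "\<dots> = \<delta> / 2" using False by simp
    finally show ?thesis using compl by linarith
  qed
qed

lemma shatter_transfer:
  assumes "shatters ((\<lambda>k i. k (\<phi> i) \<noteq> b (\<phi> i)) ` H) B"
  shows "inj_on \<phi> B" "shatters H (\<phi> ` B)"
proof -
  show inj: "inj_on \<phi> B"
  proof (rule inj_onI)
    fix x y assume xy: "x \<in> B" "y \<in> B" "\<phi> x = \<phi> y"
    show "x = y"
    proof (rule ccontr)
      assume "x \<noteq> y"
      have "{x} \<subseteq> B" using xy by simp
      then obtain h where h: "h \<in> (\<lambda>k i. k (\<phi> i) \<noteq> b (\<phi> i)) ` H" "\<forall>z\<in>B. h z = (z \<in> {x})"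
        using assms unfolding shatters_def by blast
      then obtain k where "h = (\<lambda>i. k (\<phi> i) \<noteq> b (\<phi> i))" by blast
      then have "h x = h y" using xy(3) by simp
      then show False using h(2) xy \<open>x \<noteq> y\<close> by simp
    qed
  qed
  show "shatters H (\<phi> ` B)" unfolding shatters_def
  proof (intro allI impI)
    fix B' assume B': "B' \<subseteq> \<phi> ` B"
    define C where "C = {i\<in>B. (\<phi> i \<in> B') \<noteq> b (\<phi> i)}"
    have "C \<subseteq> B" by (auto simp: C_def)
    then obtain h where h: "h \<in> (\<lambda>k i. k (\<phi> i) \<noteq> b (\<phi> i)) ` H" "\<forall>z\<in>B. h z = (z \<in> C)"
      using assms unfolding shatters_def by blast
    then obtain k where k1: "k \<in> H" "h = (\<lambda>i. k (\<phi> i) \<noteq> b (\<phi> i))" by blast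
    have k: "k \<in> H" "\<forall>z\<in>B. (k (\<phi> z) \<noteq> b (\<phi> z)) = (z \<in> C)" using h(2) k1 by auto
    show "\<exists>h\<in>H. \<forall>x\<in>\<phi> ` B. h x = (x \<in> B')"
    proof (intro bexI[OF _ k(1)] ballI)
      fix x assume "x \<in> \<phi> ` B"
      then obtain i where i: "i \<in> B" "x = \<phi> i" by blast
      show "k x = (x \<in> B')" using k(2) i by (auto simp: C_def)
    qed
  qed
qed



lemma nat_ceil_160: "nat \<lceil>160 * real d\<rceil> = 160 * d"
proof -
  have "160 * real d = real (160 * d)" by simp
  then show ?thesis by (simp only: ceiling_of_nat nat_int)
qed

lemma err_supp:
  assumes "set_pmf D \<subseteq> {..<m}" "\<forall>i<m. ys i = h (xs i)"
  shows "e2e_err T xs ys D g = measure_pmf.prob D {i. e2e T g (xs i) \<noteq> h (xs i)}"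
proof -
  have "{i. e2e T g (xs i) \<noteq> ys i} \<inter> set_pmf D = {i. e2e T g (xs i) \<noteq> h (xs i)} \<inter> set_pmf D"
    using assms by auto
  then show ?thesis unfolding e2e_err_def by (metis measure_Int_set_pmf)
qed

lemma part1:
  fixes F :: "thinker set"
  assumes m: "0 < m" and hF: "h \<in> e2e T ` F" and ys: "\<forall>i<m. ys i = h (xs i)"
    and \<delta>: "0 < \<delta>" "\<delta> < 1" and vc: "VCdim UNIV (e2e T ` F) \<noteq> \<infinity>"
    and adv: "\<forall>hist S. adv hist S \<in> F \<and> e2e T (adv hist S) = h"
    and sel: "\<forall>hist obs. (\<exists>g\<in>F. consistent T g obs) \<longrightarrow> sel hist obs \<in> F \<and> consistent T (sel hist obs) obs"
  shows "1 - \<delta> / 2 \<le> measure_pmf.prob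
        (boost T m xs ys K \<delta> (nat \<lceil>160 * real (the_enat (VCdim UNIV (e2e T ` F)))\<rceil>) adv sel)
        {es. \<forall>e\<in>set es. e \<le> 1/4}"
proof -
  define d where "d = the_enat (VCdim UNIV (e2e T ` F))"
  define G where "G = (\<lambda>k i. k (xs i) \<noteq> h (xs i)) ` (e2e T ` F)"
  have sh: "card B \<le> d" if "finite B" "shatters G B" for B
  proof -
    have "inj_on xs B" "shatters (e2e T ` F) (xs ` B)"
      using shatter_transfer[of xs h "e2e T ` F" B] that by (simp_all add: G_def)
    then show ?thesis using VCdim_le[OF vc, of "xs ` B"] that by (simp add: card_image d_def)
  qed
  have F0: "(\<lambda>_. False) \<in> G" unfolding G_def
    by (rule image_eqI[where x=h]) (simp, rule hF)
  show ?thesis unfolding d_def[symmetric] nat_ceil_160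
  proof (rule boost_final[OF _ m \<delta>])
    fix D :: "nat pmf" and hist
    assume supp: "set_pmf D \<subseteq> {..<m}"
    show "measure_pmf.prob (boost_try T (160 * d) xs ys adv sel D hist) {r. 1/4 < snd (snd r)} \<le> exp (-1)"
    proof (rule try_from_E1[OF _ eps_net[OF sh F0]])
      fix S assume S: "S \<in> set_pmf (replicate_pmf (160 * d) D)"
        and err: "1/4 < e2e_err T xs ys D (sel hist (map (\<lambda>i. (xs i, CoT T (adv hist S) (xs i))) S))"
      define f where "f = adv hist S"
      define obs where "obs = map (\<lambda>i. (xs i, CoT T f (xs i))) S"
      define g where "g = sel hist obs"
      have fF: "f \<in> F" "e2e T f = h" using adv by (simp_all add: f_def)
      have "consistent T f obs" by (auto simp: consistent_def obs_def)
      then have g: "g \<in> F" "consistent T g obs" using sel fF(1) unfolding g_def by blast+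
      have "e2e T g (xs s) = h (xs s)" if "s \<in> set S" for s
      proof -
        have "(xs s, CoT T f (xs s)) \<in> set obs" using that by (auto simp: obs_def)
        then have "CoT T g (xs s) = CoT T f (xs s)" using g(2) by (auto simp: consistent_def)
        then show ?thesis using e2e_eq_of_CoT fF(2) by metis
      qed
      moreover have "1/4 < measure_pmf.prob D {i. e2e T g (xs i) \<noteq> h (xs i)}"
        using err err_supp[OF supp ys] by (simp add: g_def obs_def f_def)
      moreover have "(\<lambda>i. e2e T g (xs i) \<noteq> h (xs i)) \<in> G" using g(1) by (auto simp: G_def)
      ultimately show "S \<in> E1 D G" unfolding E1_def
        by (intro CollectI bexI[of _ "\<lambda>i. e2e T g (xs i) \<noteq> h (xs i)"]) auto
    qed
  qed
qed



lemma part2: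
  fixes F :: "thinker set"
  assumes m: "0 < m" and hF: "h \<in> e2e T ` F" and ys: "\<forall>i<m. ys i = h (xs i)"
    and \<delta>: "0 < \<delta>" "\<delta> < 1" and vc: "VCdim {(x, z). length z = T} (CoT_loss_class T F) \<noteq> \<infinity>"
    and adv: "\<forall>hist S. adv hist S \<in> F \<and> e2e T (adv hist S) = h"
    and indep: "\<forall>hist S S'. adv hist S = adv hist S'"
    and sel: "\<forall>hist obs. (\<exists>g\<in>F. consistent T g obs) \<longrightarrow> sel hist obs \<in> F \<and> consistent T (sel hist obs) obs"
  shows "1 - \<delta> / 2 \<le> measure_pmf.prob
        (boost T m xs ys K \<delta> (nat \<lceil>160 * real (the_enat (VCdim {(x, z). length z = T} (CoT_loss_class T F)))\<rceil>) adv sel)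
        {es. \<forall>e\<in>set es. e \<le> 1/4}"
proof -
  define d where "d = the_enat (VCdim {(x, z). length z = T} (CoT_loss_class T F))"
  show ?thesis unfolding d_def[symmetric] nat_ceil_160
  proof (rule boost_final[OF _ m \<delta>])
    fix D :: "nat pmf" and hist
    assume supp: "set_pmf D \<subseteq> {..<m}"
    define f0 where "f0 = adv hist []"
    define \<phi> where "\<phi> i = (xs i, CoT T f0 (xs i))" for i
    define G where "G = (\<lambda>k i. k (\<phi> i) \<noteq> (\<lambda>_. False) (\<phi> i)) ` (CoT_loss_class T F)"
    have f0: "f0 \<in> F" "e2e T f0 = h" using adv by (simp_all add: f0_def)
    have sh: "card B \<le> d" if "finite B" "shatters G B" for B
    proof -
      have "inj_on \<phi> B" "shatters (CoT_loss_class T F) (\<phi> ` B)"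
        using shatter_transfer[of \<phi> "\<lambda>_. False" "CoT_loss_class T F" B] that by (simp_all add: G_def)
      moreover have "\<phi> ` B \<subseteq> {(x, z). length z = T}" by (auto simp: \<phi>_def)
      ultimately show ?thesis using VCdim_le[OF vc, of "\<phi> ` B"] that by (simp add: card_image d_def)
    qed
    have F0: "(\<lambda>_. False) \<in> G" unfolding G_def
    proof (rule image_eqI[where x="\<lambda>(x, z). z \<noteq> CoT T f0 x"])
      show "(\<lambda>_. False) = (\<lambda>i. (\<lambda>(x, z). z \<noteq> CoT T f0 x) (\<phi> i) \<noteq> (\<lambda>_. False) (\<phi> i))"
        by (simp add: \<phi>_def)
      show "(\<lambda>(x, z). z \<noteq> CoT T f0 x) \<in> CoT_loss_class T F" using f0 by (auto simp: CoT_loss_class_def)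
    qed
    show "measure_pmf.prob (boost_try T (160 * d) xs ys adv sel D hist) {r. 1/4 < snd (snd r)} \<le> exp (-1)"
    proof (rule try_from_E1[OF _ eps_net[OF sh F0]])
      fix S assume S: "S \<in> set_pmf (replicate_pmf (160 * d) D)"
        and err: "1/4 < e2e_err T xs ys D (sel hist (map (\<lambda>i. (xs i, CoT T (adv hist S) (xs i))) S))"
      have fS: "adv hist S = f0" unfolding f0_def using indep by blast
      define obs where "obs = map (\<lambda>i. (xs i, CoT T f0 (xs i))) S"
      define g where "g = sel hist obs"
      have "consistent T f0 obs" by (auto simp: consistent_def obs_def)
      then have g: "g \<in> F" "consistent T g obs" using sel f0(1) unfolding g_def by blast+
      define k where "k = (\<lambda>i. (\<lambda>(x, z). z \<noteq> CoT T g x) (\<phi> i) \<noteq> (\<lambda>_. False) (\<phi> i))"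
      have kG: "k \<in> G" unfolding G_def k_def using g(1) by (auto simp: CoT_loss_class_def)
      have "\<not> k s" if "s \<in> set S" for s
      proof -
        have "(xs s, CoT T f0 (xs s)) \<in> set obs" using that by (auto simp: obs_def)
        then have "CoT T g (xs s) = CoT T f0 (xs s)" using g(2) by (auto simp: consistent_def)
        then show ?thesis by (simp add: k_def \<phi>_def)
      qed
      moreover have "1/4 < measure_pmf.prob D {i. k i}"
      proof -
        have "{i. e2e T g (xs i) \<noteq> h (xs i)} \<subseteq> {i. k i}"
        proof
          fix i assume "i \<in> {i. e2e T g (xs i) \<noteq> h (xs i)}"
          then have ne: "e2e T g (xs i) \<noteq> e2e T f0 (xs i)" using f0(2) by simp
          then have "CoT T g (xs i) \<noteq> CoT T f0 (xs i)" using e2e_eq_of_CoT[of T g "xs i" f0] by blast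
          then show "i \<in> {i. k i}" by (simp add: k_def \<phi>_def)
        qed
        then have "measure_pmf.prob D {i. e2e T g (xs i) \<noteq> h (xs i)} \<le> measure_pmf.prob D {i. k i}"
          by (rule measure_pmf.finite_measure_mono) simp
        moreover have "1/4 < measure_pmf.prob D {i. e2e T g (xs i) \<noteq> h (xs i)}"
        proof -
          have "1/4 < e2e_err T xs ys D g" using err unfolding g_def obs_def fS .
          then show ?thesis using err_supp[OF supp ys, of T g] by simp
        qed
        ultimately show ?thesis by linarith
      qed
      ultimately show "S \<in> E1 D G" unfolding E1_def
        by (intro CollectI bexI[of _ k] conjI kG) auto
    qed
  qed
qed



lemma ln2_half: "1/2 \<le> ln (2::real)"
proof -
  have "exp (1/2::real) * exp (1/2) = exp 1" by (simp flip: exp_add)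
  also have "\<dots> \<le> 2 * 2" using exp_le by simp
  finally have "exp (1/2::real) \<le> 2"
    by (metis abs_le_square_iff abs_of_nonneg exp_ge_zero less_eq_real_def power2_eq_square zero_le_numeral)
  then show ?thesis by (subst ln_ge_iff) simp_all
qed

lemma real_bound:
  fixes n d T :: nat
  assumes T: "2 \<le> T" and n: "1 \<le> n" and d: "1 \<le> d" and dn: "d \<le> n * T"
    and h: "(2::real) ^ n \<le> (exp 1 * real (n * T) / real d) ^ d"
  shows "real n \<le> 12 * real d * ln (real T)"
proof -
  have l2: "1/2 \<le> ln (2::real)" by (rule ln2_half)
  have lT: "ln 2 \<le> ln (real T)" using T by simp
  have pos: "0 < exp 1 * real (n * T) / real d" using n d T by simp
  have "real n * ln 2 = ln ((2::real) ^ n)" by (simp add: ln_realpow)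
  also have "\<dots> \<le> ln ((exp 1 * real (n * T) / real d) ^ d)" using h pos by simp
  also have "\<dots> = real d * ln (exp 1 * real (n * T) / real d)" by (simp add: ln_realpow)
  also have "ln (exp 1 * real (n * T) / real d) = 1 + ln (real n) + ln (real T) - ln (real d)"
    using n d T by (simp add: ln_mult ln_div)
  finally have a: "real n * ln 2 \<le> real d * (1 + ln (real n) + ln (real T) - ln (real d))" .
  have "ln (real n / (4 * real d)) \<le> real n / (4 * real d) - 1"
    using n d by (intro ln_le_minus_one) simp
  moreover have "ln (real n / (4 * real d)) = ln (real n) - 2 * ln 2 - ln (real d)"
  proof -
    have "ln (4::real) = 2 * ln 2"
    proof -
      have "(4::real) = 2 ^ 2" by simp
      then show ?thesis by (simp only: ln_realpow)
    qed
    then show ?thesis using n d by (simp add: ln_mult ln_div)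
  qed
  ultimately have b: "ln (real n) - ln (real d) \<le> real n / (4 * real d) - 1 + 2 * ln 2" by linarith
  have "real d * (1 + ln (real n) + ln (real T) - ln (real d))
      = real d + real d * (ln (real n) - ln (real d)) + real d * ln (real T)" by (simp add: algebra_simps)
  also have "\<dots> \<le> real d + real d * (real n / (4 * real d) - 1 + 2 * ln 2) + real d * ln (real T)"
    using b d by (intro add_mono mult_left_mono) auto
  also have "\<dots> = real n / 4 + 2 * real d * ln 2 + real d * ln (real T)" using d by (simp add: field_simps)
  finally have c: "real n * ln 2 \<le> real n / 4 + 2 * real d * ln 2 + real d * ln (real T)" using a by linarith
  have "real n * (1/4) \<le> real n * (ln 2 - 1/4)" using l2 by (intro mult_left_mono) auto
  also have "\<dots> \<le> 2 * real d * ln 2 + real d * ln (real T)" using c by (simp add: algebra_simps)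
  also have "\<dots> \<le> 3 * real d * ln (real T)" using lT d by (simp add: algebra_simps)
  finally show ?thesis by simp
qed



lemma loss_traces:
  fixes F :: "thinker set"
  assumes Cs: "finite Cs" "Cs \<subseteq> {(x, z). length z = T}" "shatters (CoT_loss_class T F) Cs"
    and vc: "VCdim UNIV F \<noteq> \<infinity>"
  shows "2 ^ card Cs \<le> (\<Sum>i\<le>the_enat (VCdim UNIV F). (card Cs * T) choose i)"
proof -
  define d where "d = the_enat (VCdim UNIV F)"
  define Q where "Q = (\<lambda>((x, z), t). x @ take t z) ` (Cs \<times> {..<T})"
  have finQ: "finite Q" using Cs(1) by (simp add: Q_def)
  have cQ: "card Q \<le> card Cs * T"
  proof -
    have "card Q \<le> card (Cs \<times> {..<T})" unfolding Q_def by (rule card_image_le) (use Cs(1) in simp)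
    then show ?thesis by (simp add: card_cartesian_product)
  qed
  define \<Phi> where "\<Phi> A = {(x, z)\<in>Cs. \<not> (\<forall>t<T. (x @ take t z \<in> A) = z ! t)}" for A
  have sub: "trc (CoT_loss_class T F) Cs \<subseteq> \<Phi> ` trc F Q"
  proof
    fix A assume "A \<in> trc (CoT_loss_class T F) Cs"
    then obtain f where f: "f \<in> F" "A = {p\<in>Cs. (\<lambda>(x, z). z \<noteq> CoT T f x) p}"
      by (auto simp: trc_def CoT_loss_class_def)
    have "A = \<Phi> {q\<in>Q. f q}"
    proof (rule set_eqI)
      fix p show "p \<in> A \<longleftrightarrow> p \<in> \<Phi> {q\<in>Q. f q}"
      proof (cases "p \<in> Cs")
        case True
        obtain x z where p: "p = (x, z)" by (cases p)
        have lz: "length z = T" using True Cs(2) p by auto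
        have inQ: "x @ take t z \<in> Q" if "t < T" for t
          unfolding Q_def using True p that by (intro image_eqI[where x="((x, z), t)"]) auto
        have "(CoT T f x = z) \<longleftrightarrow> (\<forall>t<T. (x @ take t z \<in> {q\<in>Q. f q}) = z ! t)"
          using CoT_iff[OF lz, of f x] inQ by auto
        then have e: "(z \<noteq> CoT T f x) \<longleftrightarrow> \<not> (\<forall>t<T. (x @ take t z \<in> {q\<in>Q. f q}) = z ! t)" by auto
        have e1: "p \<in> A \<longleftrightarrow> z \<noteq> CoT T f x" using True by (simp add: f(2) p)
        have e2: "p \<in> \<Phi> {q\<in>Q. f q} \<longleftrightarrow> \<not> (\<forall>t<T. (x @ take t z \<in> {q\<in>Q. f q}) = z ! t)"
          using True unfolding \<Phi>_def p by blast
        show ?thesis using e e1 e2 by blast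
      next
        case False then show ?thesis by (cases p) (simp add: f(2) \<Phi>_def)
      qed
    qed
    moreover have "{q\<in>Q. f q} \<in> trc F Q" using f(1) by (auto simp: trc_def)
    ultimately show "A \<in> \<Phi> ` trc F Q" by blast
  qed
  have finT: "finite (trc F Q)" by (rule finite_subset[of _ "Pow Q"]) (auto simp: trc_def finQ)
  have "Pow Cs \<subseteq> trc (CoT_loss_class T F) Cs"
  proof
    fix B assume "B \<in> Pow Cs"
    then obtain k where "k \<in> CoT_loss_class T F" "\<forall>x\<in>Cs. k x = (x \<in> B)"
      using Cs(3) unfolding shatters_def by blast
    moreover have "B = {x\<in>Cs. k x}" using calculation \<open>B \<in> Pow Cs\<close> by auto
    ultimately show "B \<in> trc (CoT_loss_class T F) Cs" by (auto simp: trc_def)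
  qed
  then have "2 ^ card Cs \<le> card (trc (CoT_loss_class T F) Cs)"
    using Cs(1) by (metis card_Pow card_mono finite_imageI finT sub finite_subset)
  also have "\<dots> \<le> card (\<Phi> ` trc F Q)" by (rule card_mono[OF finite_imageI[OF finT] sub])
  also have "\<dots> \<le> card (trc F Q)" by (rule card_image_le[OF finT])
  also have "\<dots> \<le> (\<Sum>i\<le>d. card Q choose i)"
  proof (rule sauer[OF finQ])
    fix B assume "B \<subseteq> Q" "shatters F B"
    then show "card B \<le> d" unfolding d_def using VCdim_le[OF vc, of B] finite_subset[OF _ finQ] by simp
  qed
  also have "\<dots> \<le> (\<Sum>i\<le>d. (card Cs * T) choose i)" by (rule binom_sum_mono[OF cQ])
  finally show ?thesis by (simp add: d_def)
qed



lemma loss_card: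
  fixes F :: "thinker set"
  assumes T: "2 \<le> T" and Cs: "finite Cs" "Cs \<subseteq> {(x, z). length z = T}" "shatters (CoT_loss_class T F) Cs"
    and vc: "VCdim UNIV F \<noteq> \<infinity>"
  shows "real (card Cs) \<le> 12 * real (the_enat (VCdim UNIV F)) * ln (real T)"
proof -
  define d where "d = the_enat (VCdim UNIV F)"
  define n where "n = card Cs"
  have lT: "1/2 \<le> ln (real T)"
  proof -
    have "ln 2 \<le> ln (real T)" using T by simp
    then show ?thesis using ln2_half by linarith
  qed
  have tr: "2 ^ n \<le> (\<Sum>i\<le>d. (n * T) choose i)"
    unfolding n_def d_def by (rule loss_traces[OF Cs vc])
  have main: "real n \<le> 12 * real d * ln (real T)"
  proof (cases "n = 0")
    case True then show ?thesis using lT by simp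
  next
    case False
    then have n1: "1 \<le> n" by simp
    have d1: "1 \<le> d"
    proof (rule ccontr)
      assume "\<not> 1 \<le> d"
      then have "d = 0" by simp
      then have "(2::nat) ^ n \<le> 1" using tr by simp
      moreover have "(2::nat) ^ 1 \<le> 2 ^ n" using n1 by (intro power_increasing) auto
      ultimately show False by simp
    qed
    show ?thesis
    proof (cases "d \<le> n * T")
      case True
      have "real ((2::nat) ^ n) \<le> real (\<Sum>i\<le>d. (n * T) choose i)" using tr by (simp only: of_nat_le_iff)
      also have "\<dots> \<le> (exp 1 * real (n * T) / real d) ^ d" by (rule binom_sum_bound[OF d1 True])
      finally have "(2::real) ^ n \<le> (exp 1 * real (n * T) / real d) ^ d" by simp
      then show ?thesis by (rule real_bound[OF T n1 d1 True])
    next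
      case False
      have "real n \<le> real (n * T)" using T by (simp only: of_nat_le_iff) simp
      also have "\<dots> \<le> real d" using False by (simp only: of_nat_le_iff)
      also have "\<dots> \<le> 12 * real d * ln (real T)"
      proof -
        have "1 \<le> 12 * ln (real T)" using lT by linarith
        then have "real d * 1 \<le> real d * (12 * ln (real T))" by (intro mult_left_mono) auto
        moreover have "12 * real d * ln (real T) = real d * (12 * ln (real T))" by simp
        ultimately show ?thesis by linarith
      qed
      finally show ?thesis .
    qed
  qed
  then show ?thesis by (simp add: n_def d_def)
qed

lemma part3:
  "\<exists>C>0. \<forall>(F :: thinker set) T. 2 \<le> T \<longrightarrow> VCdim UNIV F \<noteq> \<infinity> \<longrightarrow>
      VCdim {(x, z). length z = T} (CoT_loss_class T F) \<noteq> \<infinity> \<and>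
      real (the_enat (VCdim {(x, z). length z = T} (CoT_loss_class T F)))
        \<le> C * real (the_enat (VCdim UNIV F)) * ln (real T)"
proof (intro exI[of _ 12] conjI allI impI)
  fix F :: "thinker set" and T :: nat
  assume T: "2 \<le> T" and vc: "VCdim UNIV F \<noteq> \<infinity>"
  define x where "x = 12 * real (the_enat (VCdim UNIV F)) * ln (real T)"
  have b: "card Cs \<le> nat \<lfloor>x\<rfloor>" if "finite Cs" "Cs \<subseteq> {(x, z). length z = T}" "shatters (CoT_loss_class T F) Cs" for Cs
    using loss_card[OF T that vc] unfolding x_def by (simp add: le_nat_floor)
  show "VCdim {(x, z). length z = T} (CoT_loss_class T F) \<noteq> \<infinity>" by (rule VCdim_bound(1)[OF b])
  have "the_enat (VCdim {(x, z). length z = T} (CoT_loss_class T F)) \<le> nat \<lfloor>x\<rfloor>" by (rule VCdim_bound(2)[OF b])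
  then have "real (the_enat (VCdim {(x, z). length z = T} (CoT_loss_class T F))) \<le> real (nat \<lfloor>x\<rfloor>)" by simp
  also have "\<dots> \<le> x"
  proof -
    have "0 \<le> x" using T unfolding x_def by simp
    then show ?thesis by linarith
  qed
  finally show "real (the_enat (VCdim {(x, z). length z = T} (CoT_loss_class T F))) \<le> 12 * real (the_enat (VCdim UNIV F)) * ln (real T)"
    by (simp add: x_def)
qed simp



theorem lemma9p4:
  shows "\<exists>c>0.
   (\<forall>(F :: thinker set) T m xs ys h \<delta> K adv sel.
      0 < m \<longrightarrow> h \<in> e2e T ` F \<longrightarrow> (\<forall>i<m. ys i = h (xs i)) \<longrightarrow> 0 < \<delta> \<longrightarrow> \<delta> < 1 \<longrightarrow>
      VCdim UNIV (e2e T ` F) \<noteq> \<infinity> \<longrightarrow>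
      (\<forall>hist S. adv hist S \<in> F \<and> e2e T (adv hist S) = h) \<longrightarrow>
      (\<forall>hist obs. (\<exists>g\<in>F. consistent T g obs) \<longrightarrow> sel hist obs \<in> F \<and> consistent T (sel hist obs) obs) \<longrightarrow>
      measure_pmf.prob
        (boost T m xs ys K \<delta> (nat \<lceil>c * real (the_enat (VCdim UNIV (e2e T ` F)))\<rceil>) adv sel)
        {es. \<forall>e\<in>set es. e \<le> 1/4} \<ge> 1 - \<delta> / 2)
 \<and> (\<forall>(F :: thinker set) T m xs ys h \<delta> K adv sel.
      0 < m \<longrightarrow> h \<in> e2e T ` F \<longrightarrow> (\<forall>i<m. ys i = h (xs i)) \<longrightarrow> 0 < \<delta> \<longrightarrow> \<delta> < 1 \<longrightarrow>
      VCdim {(x, z). length z = T} (CoT_loss_class T F) \<noteq> \<infinity> \<longrightarrow>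
      (\<forall>hist S. adv hist S \<in> F \<and> e2e T (adv hist S) = h) \<longrightarrow>
      (\<forall>hist S S'. adv hist S = adv hist S') \<longrightarrow>
      (\<forall>hist obs. (\<exists>g\<in>F. consistent T g obs) \<longrightarrow> sel hist obs \<in> F \<and> consistent T (sel hist obs) obs) \<longrightarrow>
      measure_pmf.prob
        (boost T m xs ys K \<delta>
           (nat \<lceil>c * real (the_enat (VCdim {(x, z). length z = T} (CoT_loss_class T F)))\<rceil>) adv sel)
        {es. \<forall>e\<in>set es. e \<le> 1/4} \<ge> 1 - \<delta> / 2)
 \<and> (\<exists>C>0. \<forall>(F :: thinker set) T. 2 \<le> T \<longrightarrow> VCdim UNIV F \<noteq> \<infinity> \<longrightarrow>
      VCdim {(x, z). length z = T} (CoT_loss_class T F) \<noteq> \<infinity> \<and>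
      real (the_enat (VCdim {(x, z). length z = T} (CoT_loss_class T F)))
        \<le> C * real (the_enat (VCdim UNIV F)) * ln (real T))"
proof -
  have p1: "\<forall>(F :: thinker set) T m xs ys h \<delta> K adv sel.
      0 < m \<longrightarrow> h \<in> e2e T ` F \<longrightarrow> (\<forall>i<m. ys i = h (xs i)) \<longrightarrow> 0 < \<delta> \<longrightarrow> \<delta> < 1 \<longrightarrow>
      VCdim UNIV (e2e T ` F) \<noteq> \<infinity> \<longrightarrow>
      (\<forall>hist S. adv hist S \<in> F \<and> e2e T (adv hist S) = h) \<longrightarrow>
      (\<forall>hist obs. (\<exists>g\<in>F. consistent T g obs) \<longrightarrow> sel hist obs \<in> F \<and> consistent T (sel hist obs) obs) \<longrightarrow>
      measure_pmf.prob
        (boost T m xs ys K \<delta> (nat \<lceil>160 * real (the_enat (VCdim UNIV (e2e T ` F)))\<rceil>) adv sel)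
        {es. \<forall>e\<in>set es. e \<le> 1/4} \<ge> 1 - \<delta> / 2"
    by (intro allI impI) (rule part1; assumption)
  have p2: "\<forall>(F :: thinker set) T m xs ys h \<delta> K adv sel.
      0 < m \<longrightarrow> h \<in> e2e T ` F \<longrightarrow> (\<forall>i<m. ys i = h (xs i)) \<longrightarrow> 0 < \<delta> \<longrightarrow> \<delta> < 1 \<longrightarrow>
      VCdim {(x, z). length z = T} (CoT_loss_class T F) \<noteq> \<infinity> \<longrightarrow>
      (\<forall>hist S. adv hist S \<in> F \<and> e2e T (adv hist S) = h) \<longrightarrow>
      (\<forall>hist S S'. adv hist S = adv hist S') \<longrightarrow>
      (\<forall>hist obs. (\<exists>g\<in>F. consistent T g obs) \<longrightarrow> sel hist obs \<in> F \<and> consistent T (sel hist obs) obs) \<longrightarrow>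
      measure_pmf.prob
        (boost T m xs ys K \<delta>
           (nat \<lceil>160 * real (the_enat (VCdim {(x, z). length z = T} (CoT_loss_class T F)))\<rceil>) adv sel)
        {es. \<forall>e\<in>set es. e \<le> 1/4} \<ge> 1 - \<delta> / 2"
    by (intro allI impI) (rule part2; assumption)
  have p3: "\<exists>C>0. \<forall>(F :: thinker set) T. 2 \<le> T \<longrightarrow> VCdim UNIV F \<noteq> \<infinity> \<longrightarrow>
      VCdim {(x, z). length z = T} (CoT_loss_class T F) \<noteq> \<infinity> \<and>
      real (the_enat (VCdim {(x, z). length z = T} (CoT_loss_class T F)))
        \<le> C * real (the_enat (VCdim UNIV F)) * ln (real T)"
    by (rule part3)
  show ?thesis
    apply (rule exI[of _ 160])
    apply (intro conjI)
    apply simp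
    apply (rule p1)
    apply (rule p2)
    apply (rule p3)
    done
qed

end
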